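(* Let $p$ be a prime, $1\le s\le n$ integers with $s\ne1$ if $p=2$. Let $K$ be a field of characteristic zero containing a primitive $p^s$-th root of unity $\xi$ and no primitive $p^{s+1}$-th root of unity. Let $c\in K^\times$ be such that $L=K(u)$, where $u^{p^n}=c^{p^{n-s}}\xi$, is a field extension of $K$ of degree $p^n$; then $L/K$ is cyclic Galois and has a generator $\sigma$ of $\mathrm{Gal}(L/K)$ with $\sigma(u)=c^{-1}u^{p^s+1}$. Let $k=K((t))$ and let $D=(L((t))/k,\sigma,t)$ be the cyclic algebra, i.e. $D=\bigoplus_{i=0}^{p^n-1}L((t))\,v^i$ with $vb=\sigma(b)v$ for $b\in L((t))$ and $v^{p^n}=t$. Then $D$ is a central division $k$-algebra and $D\cong k^\alpha G$ for some $\alpha\in H^2(G,k^\times)$, where $G=\langle\pi,\sigma\mid \pi^{p^n}=\sigma^{p^n}=1,\ \sigma\pi\sigma^{-1}=\pi^{p^s+1}\rangle$ (the elements $u$ and $v$ representing $\pi$ and $\sigma$).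
   Context: $k^\alpha G$ denotes the twisted group algebra ($k$-basis $\{u_g\}_{g\in G}$, $u_gu_h=f(g,h)u_{gh}$ for a 2-cocycle $f$ representing $\alpha$, trivial action). $L((t))$ is the Laurent series field over $L$, with $\sigma$ extended coefficientwise. *)

theory Defs
  imports "HOL-Computational_Algebra.Formal_Laurent_Series"
begin

definition primitive_root_of_unity :: "nat \<Rightarrow> 'a::field \<Rightarrow> bool" where
  "primitive_root_of_unity m z \<longleftrightarrow> 0 < m \<and> z ^ m = 1 \<and> (\<forall>j. 0 < j \<and> j < m \<longrightarrow> z ^ j \<noteq> 1)"

section \<open>Field extensions  iota : K -> L  (L a field type, K embedded via iota)\<close>

definition field_hom :: "('a::field \<Rightarrow> 'b::field) \<Rightarrow> bool" where
  "field_hom f \<longleftrightarrow> f 1 = 1 \<and> (\<forall>x y. f (x + y) = f x + f y) \<and> (\<forall>x y. f (x * y) = f x * f y)"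

definition is_subfield :: "'b::field set \<Rightarrow> bool" where
  "is_subfield F \<longleftrightarrow> 0 \<in> F \<and> 1 \<in> F \<and> (\<forall>x\<in>F. \<forall>y\<in>F. x + y \<in> F \<and> x * y \<in> F)
     \<and> (\<forall>x\<in>F. - x \<in> F) \<and> (\<forall>x\<in>F. x \<noteq> 0 \<longrightarrow> inverse x \<in> F)"

definition generated_field :: "'b::field set \<Rightarrow> 'b set" where
  "generated_field S = \<Inter>{F. is_subfield F \<and> S \<subseteq> F}"

definition ext_degree_is :: "('a::field \<Rightarrow> 'b::field) \<Rightarrow> nat \<Rightarrow> bool" where
  "ext_degree_is iota d \<longleftrightarrow> (\<exists>B::'b set. finite B \<and> card B = d
      \<and> (\<forall>a::'b \<Rightarrow> 'a. (\<Sum>b\<in>B. iota (a b) * b) = 0 \<longrightarrow> (\<forall>b\<in>B. a b = 0))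
      \<and> (\<forall>y. \<exists>a::'b \<Rightarrow> 'a. y = (\<Sum>b\<in>B. iota (a b) * b)))"

definition galois_aut :: "('a::field \<Rightarrow> 'b::field) \<Rightarrow> ('b \<Rightarrow> 'b) \<Rightarrow> bool" where
  "galois_aut iota \<sigma> \<longleftrightarrow> bij \<sigma> \<and> field_hom \<sigma> \<and> (\<forall>a. \<sigma> (iota a) = iota a)"

definition galois_group :: "('a::field \<Rightarrow> 'b::field) \<Rightarrow> ('b \<Rightarrow> 'b) set" where
  "galois_group iota = {\<sigma>. galois_aut iota \<sigma>}"

definition fls_cmap :: "('a::zero \<Rightarrow> 'b::zero) \<Rightarrow> 'a fls \<Rightarrow> 'b fls" where
  "fls_cmap f F = Abs_fls (\<lambda>n. f (fls_nth F n))"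

text \<open>An element sum_{i<N} x_i v^i is represented by the function x with x i = 0 for i >= N.\<close>
definition cyc_carrier :: "nat \<Rightarrow> (nat \<Rightarrow> 'b::field fls) set" where
  "cyc_carrier N = {x. \<forall>i\<ge>N. x i = 0}"

definition cyc_one :: "nat \<Rightarrow> 'b::field fls" where
  "cyc_one i = (if i = 0 then 1 else 0)"

text \<open>(a v^i)(b v^j) = a sigma^i(b) v^(i+j), and v^N = t.\<close>
definition cyc_mult :: "nat \<Rightarrow> ('b::field \<Rightarrow> 'b) \<Rightarrow> (nat \<Rightarrow> 'b fls) \<Rightarrow> (nat \<Rightarrow> 'b fls) \<Rightarrow> (nat \<Rightarrow> 'b fls)" where
  "cyc_mult N \<sigma> x y = (\<lambda>k. if k < N then
      (\<Sum>i<N. \<Sum>j<N. if (i + j) mod N = k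
          then (if N \<le> i + j then fls_X else 1) * x i * fls_cmap (\<sigma> ^^ i) (y j) else 0)
      else 0)"

definition cyc_scalar :: "('a::field \<Rightarrow> 'b::field) \<Rightarrow> 'a fls \<Rightarrow> (nat \<Rightarrow> 'b fls)" where
  "cyc_scalar iota a = (\<lambda>i. if i = 0 then fls_cmap iota a else 0)"

definition cyc_smult :: "('a::field \<Rightarrow> 'b::field) \<Rightarrow> 'a fls \<Rightarrow> (nat \<Rightarrow> 'b fls) \<Rightarrow> (nat \<Rightarrow> 'b fls)" where
  "cyc_smult iota a x = (\<lambda>i. fls_cmap iota a * x i)"

definition cyc_elem_L :: "'b::field \<Rightarrow> (nat \<Rightarrow> 'b fls)" where
  "cyc_elem_L u = (\<lambda>i. if i = 0 then fls_const u else 0)"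

definition cyc_v :: "nat \<Rightarrow> 'b::field fls" where
  "cyc_v i = (if i = 1 then 1 else 0)"

definition cyc_is_division :: "nat \<Rightarrow> ('b::field \<Rightarrow> 'b) \<Rightarrow> bool" where
  "cyc_is_division N \<sigma> \<longleftrightarrow> (\<forall>x\<in>cyc_carrier N. x \<noteq> (\<lambda>_. 0) \<longrightarrow>
      (\<exists>y\<in>cyc_carrier N. cyc_mult N \<sigma> x y = cyc_one \<and> cyc_mult N \<sigma> y x = cyc_one))"

definition cyc_is_central :: "('a::field \<Rightarrow> 'b::field) \<Rightarrow> nat \<Rightarrow> ('b \<Rightarrow> 'b) \<Rightarrow> bool" where
  "cyc_is_central iota N \<sigma> \<longleftrightarrow>
     {z\<in>cyc_carrier N. \<forall>x\<in>cyc_carrier N. cyc_mult N \<sigma> z x = cyc_mult N \<sigma> x z} = range (cyc_scalar iota)"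

section \<open>The group G = < pi, sigma | pi^N = sigma^N = 1, sigma pi sigma^-1 = pi^m >,  N = p^n, m = p^s+1\<close>

text \<open>Every element is uniquely pi^a sigma^b with a, b < N; encoded as the pair (a,b).
  Then pi^a sigma^b pi^c sigma^d = pi^(a + c m^b) sigma^(b+d).\<close>
definition G_carrier :: "nat \<Rightarrow> (nat \<times> nat) set" where
  "G_carrier N = {0..<N} \<times> {0..<N}"

definition G_mult :: "nat \<Rightarrow> nat \<Rightarrow> nat \<times> nat \<Rightarrow> nat \<times> nat \<Rightarrow> nat \<times> nat" where
  "G_mult N m g h = ((fst g + fst h * m ^ snd g) mod N, (snd g + snd h) mod N)"

definition G_pi :: "nat \<times> nat" where "G_pi = (1, 0)"
definition G_sigma :: "nat \<times> nat" where "G_sigma = (0, 1)"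

definition two_cocycle :: "nat \<Rightarrow> nat \<Rightarrow> (nat \<times> nat \<Rightarrow> nat \<times> nat \<Rightarrow> 'k::field) \<Rightarrow> bool" where
  "two_cocycle N m f \<longleftrightarrow>
     (\<forall>g\<in>G_carrier N. \<forall>h\<in>G_carrier N. f g h \<noteq> 0) \<and>
     (\<forall>g\<in>G_carrier N. \<forall>h\<in>G_carrier N. \<forall>l\<in>G_carrier N.
        f g h * f (G_mult N m g h) l = f h l * f g (G_mult N m h l))"

definition tga_carrier :: "nat \<Rightarrow> (nat \<times> nat \<Rightarrow> 'k::field) set" where
  "tga_carrier N = {x. \<forall>g. g \<notin> G_carrier N \<longrightarrow> x g = 0}"

definition tga_mult :: "nat \<Rightarrow> nat \<Rightarrow> (nat \<times> nat \<Rightarrow> nat \<times> nat \<Rightarrow> 'k::field)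
    \<Rightarrow> (nat \<times> nat \<Rightarrow> 'k) \<Rightarrow> (nat \<times> nat \<Rightarrow> 'k) \<Rightarrow> (nat \<times> nat \<Rightarrow> 'k)" where
  "tga_mult N m f x y = (\<lambda>g. if g \<in> G_carrier N then
      (\<Sum>h\<in>G_carrier N. \<Sum>l\<in>G_carrier N. if G_mult N m h l = g then x h * y l * f h l else 0)
      else 0)"

definition tga_basis :: "nat \<times> nat \<Rightarrow> (nat \<times> nat \<Rightarrow> 'k::field)" where
  "tga_basis g = (\<lambda>h. if h = g then 1 else 0)"

end

theory Submission
  imports Defs "HOL-Computational_Algebra.Primes" "HOL-Computational_Algebra.Polynomial" "HOL-Library.Function_Algebras"
begin


lemma vs_inj_imp_surj_span:
  fixes scale :: "'k::field \<Rightarrow> 'v::ab_group_add \<Rightarrow> 'v"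
  assumes vs: "vector_space scale"
    and add: "\<And>x y. T (x + y) = T x + T y"
    and sc: "\<And>a x. T (scale a x) = scale a (T x)"
    and fin: "finite S"
    and into: "T ` (module.span scale S) \<subseteq> module.span scale S"
    and inj: "inj_on T (module.span scale S)"
  shows "T ` (module.span scale S) = module.span scale S"
proof -
  interpret V: vector_space scale by fact
  have hom: "module_hom scale scale T"
    using add sc by (simp add: module_hom_iff V.module_axioms)
  obtain B where B: "B \<subseteq> V.span S" "V.independent B" "V.span S \<subseteq> V.span B" "card B = V.dim (V.span S)"
    using V.basis_exists by blast
  have finB: "finite B" "card B \<le> card S"
    using V.independent_span_bound[OF fin B(2)] B(1) by auto
  have spanBS: "V.span B = V.span S"
    using B(1,3) V.span_minimal V.subspace_span by (metis V.span_span subset_antisym V.span_mono)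
  have indTB: "V.independent (T ` B)"
    using module_hom.independent_injective_image[OF hom B(2)] inj spanBS by simp
  have cardTB: "card (T ` B) = card B"
    using card_image inj_on_subset[OF inj B(1)] by blast
  have TBsub: "T ` B \<subseteq> V.span S" using into B(1) V.span_superset by blast
  have "V.span S \<subseteq> V.span (T ` B)"
  proof
    fix x assume x: "x \<in> V.span S"
    show "x \<in> V.span (T ` B)"
    proof (rule ccontr)
      assume nx: "x \<notin> V.span (T ` B)"
      then have ind: "V.independent (insert x (T ` B))"
        using V.independent_insertI indTB by blast
      have "insert x (T ` B) \<subseteq> V.span B" using x TBsub spanBS by auto
      then have "card (insert x (T ` B)) \<le> card B"
        using V.independent_span_bound[OF finB(1) ind] by auto
      moreover have "x \<notin> T ` B" using nx V.span_superset by blast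
      then have "card (insert x (T ` B)) = card B + 1"
        using finB(1) cardTB by simp
      ultimately show False by simp
    qed
  qed
  moreover have "V.span (T ` B) = T ` V.span B"
    using module_hom.span_image[OF hom] .
  ultimately show ?thesis using into spanBS by auto
qed


notation fls_nth (infixl \<open>$$\<close> 75)


context
  fixes f :: "'a::field \<Rightarrow> 'b::field"
  assumes fh: "field_hom f"
begin

lemma fh_1: "f 1 = 1" and fh_add: "f (x + y) = f x + f y" and fh_mult: "f (x * y) = f x * f y"
  using fh unfolding field_hom_def by auto

lemma fh_0: "f 0 = 0"
  using fh_add[of 0 0] by (metis add_cancel_right_right add.right_neutral)

lemma fh_uminus: "f (- x) = - f x"
  using fh_add[of x "-x"] fh_0 by (simp add: eq_neg_iff_add_eq_0 add.commute)

lemma fh_diff: "f (x - y) = f x - f y"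
  using fh_add[of x "-y"] fh_uminus[of y] by simp

lemma fh_power: "f (x ^ n) = f x ^ n"
  by (induction n) (auto simp: fh_1 fh_mult)

lemma fh_sum: "f (sum g A) = sum (\<lambda>i. f (g i)) A"
  by (induction A rule: infinite_finite_induct) (auto simp: fh_0 fh_add)

lemma fh_prod: "f (prod g A) = prod (\<lambda>i. f (g i)) A"
  by (induction A rule: infinite_finite_induct) (auto simp: fh_1 fh_mult)

lemma fh_eq0: "f x = 0 \<longleftrightarrow> x = 0"
proof
  assume "f x = 0"
  show "x = 0"
  proof (rule ccontr)
    assume "x \<noteq> 0"
    then have "f x * f (inverse x) = 1" using fh_mult[of x "inverse x"] fh_1 by simp
    with \<open>f x = 0\<close> show False by simp
  qed
qed (simp add: fh_0)

lemma fh_inj: "inj f"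
proof (rule injI)
  fix x y assume "f x = f y"
  then have "f (x - y) = 0" by (simp add: fh_diff)
  then show "x = y" by (simp add: fh_eq0)
qed

lemma fh_inverse: "f (inverse x) = inverse (f x)"
proof (cases "x = 0")
  case True then show ?thesis by (simp add: fh_0)
next
  case False
  then have "f x * f (inverse x) = 1" using fh_mult[of x "inverse x"] fh_1 by simp
  then show ?thesis by (metis inverse_unique)
qed

lemma fh_divide: "f (x / y) = f x / f y"
  by (simp add: divide_inverse fh_mult fh_inverse)

lemma fh_power_int: "f (x powi k) = f x powi k"
  by (cases "k \<ge> 0") (auto simp: power_int_def fh_power fh_inverse)

end

lemma field_hom_id: "field_hom id" and field_hom_id': "field_hom (\<lambda>x. x)"
  by (auto simp: field_hom_def)

lemma field_hom_comp: "field_hom f \<Longrightarrow> field_hom g \<Longrightarrow> field_hom (f \<circ> g)"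
  by (auto simp: field_hom_def)

lemma field_hom_funpow: "field_hom (f::'a::field \<Rightarrow> 'a) \<Longrightarrow> field_hom (f ^^ n)"
  by (induction n) (auto simp: field_hom_id intro: field_hom_comp)

lemma fls_cmap_nth [simp]:
  assumes "f 0 = 0"
  shows "fls_cmap f F $$ n = f (F $$ n)"
proof -
  have "\<forall>n < fls_subdegree F. f (F $$ n) = 0" using assms by simp
  then show ?thesis unfolding fls_cmap_def by (rule nth_Abs_fls_lower_bound)
qed

context
  fixes f :: "'a::field \<Rightarrow> 'b::field"
  assumes fh: "field_hom f"
begin

lemma cmap_nth: "fls_cmap f F $$ n = f (F $$ n)"
  by (simp add: fh_0[OF fh])

lemma cmap_0 [simp]: "fls_cmap f 0 = 0"
  by (rule fls_eqI) (simp add: cmap_nth fh_0[OF fh])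

lemma cmap_eq0: "fls_cmap f F = 0 \<longleftrightarrow> F = 0"
  by (auto simp: fls_eq_iff cmap_nth fh_eq0[OF fh])

lemma cmap_subdegree: "fls_subdegree (fls_cmap f F) = fls_subdegree F"
proof (cases "F = 0")
  case True then show ?thesis by simp
next
  case False
  then have nz: "fls_cmap f F \<noteq> 0" by (simp add: cmap_eq0)
  show ?thesis
    by (rule fls_subdegree_eqI) (auto simp: cmap_nth fh_eq0[OF fh] False)
qed

lemma cmap_add: "fls_cmap f (F + G) = fls_cmap f F + fls_cmap f G"
  by (rule fls_eqI) (simp add: cmap_nth fh_add[OF fh])

lemma cmap_uminus: "fls_cmap f (- F) = - fls_cmap f F"
  by (rule fls_eqI) (simp add: cmap_nth fh_uminus[OF fh])

lemma cmap_diff: "fls_cmap f (F - G) = fls_cmap f F - fls_cmap f G"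
  by (rule fls_eqI) (simp add: cmap_nth fh_diff[OF fh])

lemma cmap_mult: "fls_cmap f (F * G) = fls_cmap f F * fls_cmap f G"
proof (rule fls_eqI)
  fix n
  show "fls_cmap f (F * G) $$ n = (fls_cmap f F * fls_cmap f G) $$ n"
    by (simp add: cmap_nth fls_times_nth(2) cmap_subdegree fh_sum[OF fh] fh_mult[OF fh])
qed

lemma cmap_1 [simp]: "fls_cmap f 1 = 1"
  by (rule fls_eqI) (simp add: cmap_nth fh_1[OF fh] fh_0[OF fh])

lemma cmap_const [simp]: "fls_cmap f (fls_const c) = fls_const (f c)"
  by (rule fls_eqI) (simp add: cmap_nth fh_0[OF fh])

lemma cmap_X [simp]: "fls_cmap f fls_X = fls_X"
  by (rule fls_eqI) (simp add: cmap_nth fh_1[OF fh] fh_0[OF fh])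

lemma cmap_power: "fls_cmap f (F ^ k) = fls_cmap f F ^ k"
  by (induction k) (auto simp: cmap_mult)

lemma cmap_sum: "fls_cmap f (sum g A) = sum (\<lambda>i. fls_cmap f (g i)) A"
  by (induction A rule: infinite_finite_induct) (auto simp: cmap_add)

lemma cmap_inj: "inj (fls_cmap f)"
  by (rule injI) (metis cmap_diff cmap_eq0 right_minus_eq)

end

lemma cmap_comp:
  assumes "g 0 = 0" "f 0 = 0"
  shows "fls_cmap (f \<circ> g) F = fls_cmap f (fls_cmap g F)"
  by (rule fls_eqI) (simp add: assms)

lemma cmap_id [simp]: "fls_cmap (\<lambda>x. x) F = F" "fls_cmap id F = F"
  by (auto intro: fls_eqI)

lemma cmap_cong: "(\<And>x. f x = g x) \<Longrightarrow> fls_cmap f F = fls_cmap g F"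
  by (metis ext)


lemma binom_step:
  fixes p j y :: nat
  assumes p: "prime p" and j: "1 \<le> j" and j2: "p = 2 \<longrightarrow> 2 \<le> j"
  shows "\<exists>z. (1 + p^j * y)^p = 1 + p^(j+1) * y + p^(j+2) * z"
proof -
  define x where "x = p^j * y"
  have p2: "2 \<le> p" using p prime_ge_2_nat by blast
  have "(x + 1)^p = (\<Sum>k\<le>p. of_nat (p choose k) * x^k * 1^(p-k))"
    by (rule binomial_ring)
  also have "\<dots> = (\<Sum>k\<le>p. (p choose k) * x^k)" by simp
  also have "{..p} = {0,1} \<union> {2..p}" using p2 by auto
  also have "(\<Sum>k\<in>{0,1} \<union> {2..p}. (p choose k) * x^k) = 1 + p * x + (\<Sum>k\<in>{2..p}. (p choose k) * x^k)"
    by (subst sum.union_disjoint) auto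
  finally have eq: "(1 + x)^p = 1 + p * x + (\<Sum>k\<in>{2..p}. (p choose k) * x^k)" by (simp add: add.commute)
  have "p^(j+2) dvd (\<Sum>k\<in>{2..p}. (p choose k) * x^k)"
  proof (rule dvd_sum)
    fix k assume k: "k \<in> {2..p}"
    have xk: "x^k = p^(j*k) * y^k" by (simp add: x_def power_mult_distrib power_mult)
    show "p^(j+2) dvd (p choose k) * x^k"
    proof (cases "k < p")
      case True
      have "p dvd (p choose k)" using dvd_choose_prime[OF True] k p p2 by auto
      moreover have "p^(j+1) dvd p^(j*k)"
      proof (rule le_imp_power_dvd)
        have "j * 2 \<le> j * k" using k by auto
        then show "j + 1 \<le> j * k" using j by linarith
      qed
      ultimately have "p * p^(j+1) dvd (p choose k) * p^(j*k)" by (rule mult_dvd_mono)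
      then have "p^(j+2) dvd (p choose k) * p^(j*k)" by (simp add: power_add power_Suc mult.commute mult.left_commute)
      then show ?thesis using xk by (metis dvd_mult2 mult.assoc)
    next
      case False
      then have kp: "k = p" using k by auto
      have "j + 2 \<le> j * p"
      proof (cases "p = 2")
        case True then show ?thesis using j2 by auto
      next
        case False
        then have "3 \<le> p" using p2 by auto
        then have "j * 3 \<le> j * p" by auto
        then show ?thesis using j by linarith
      qed
      then have "p^(j+2) dvd p^(j*k)" using kp by (metis le_imp_power_dvd)
      then show ?thesis using xk by (metis dvd_mult dvd_mult2)
    qed
  qed
  then obtain z where "(\<Sum>k\<in>{2..p}. (p choose k) * x^k) = p^(j+2) * z" by (auto elim: dvdE)
  with eq have "(1 + x)^p = 1 + p^(j+1) * y + p^(j+2) * z"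
    by (simp add: x_def power_Suc mult.commute mult.left_commute)
  then show ?thesis unfolding x_def by blast
qed

definition mm :: "nat \<Rightarrow> nat \<Rightarrow> nat" where "mm p s = p^s + 1"
definition SS :: "nat \<Rightarrow> nat \<Rightarrow> nat \<Rightarrow> nat" where "SS p s d = (\<Sum>j<d. mm p s ^ j)"

context
  fixes p s :: nat
  assumes p: "prime p" and s1: "1 \<le> s" and s2: "p = 2 \<longrightarrow> s \<noteq> 1"
begin

abbreviation mm0 where "mm0 \<equiv> mm p s"
abbreviation SS0 where "SS0 \<equiv> SS p s"

lemma mm_pow_p: "\<exists>y. mm0^(p^k) = 1 + p^(s+k) * y \<and> \<not> p dvd y"
proof (induction k)
  case 0
  have "p \<noteq> 1" using prime_gt_1_nat[OF p] by simp
  then show ?case by (intro exI[of _ 1]) (simp add: mm_def add.commute)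
next
  case (Suc k)
  then obtain y where y: "mm0^(p^k) = 1 + p^(s+k) * y" "\<not> p dvd y" by blast
  have "\<exists>z. (1 + p^(s+k) * y)^p = 1 + p^(s+k+1) * y + p^(s+k+2) * z"
    using binom_step[OF p, of "s+k" y] s1 s2 by auto
  then obtain z where z: "(1 + p^(s+k) * y)^p = 1 + p^(s+k+1) * y + p^(s+k+2) * z" by blast
  have "mm0^(p^Suc k) = (mm0^(p^k))^p" by (metis power_Suc2 power_mult)
  also have "\<dots> = 1 + p^(s + Suc k) * (y + p * z)" using y z by (simp add: algebra_simps power_Suc)
  finally show ?case
    using y(2) by (intro exI[of _ "y + p*z"]) (auto simp: dvd_add_left_iff)
qed

lemma SS_add: "SS0 (a + b) = SS0 a + mm0^a * SS0 b"
  by (induction b) (simp_all add: SS_def algebra_simps power_add)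


lemma p_gt1: "1 < p" using prime_gt_1_nat[OF p] .

lemma not_p_dvd_mm: "\<not> p dvd mm0"
proof
  assume "p dvd mm0"
  moreover have "p dvd p^s" using s1 by (simp add: dvd_power)
  ultimately have "p dvd 1" unfolding mm_def by (metis dvd_add_right_iff)
  then show False using p_gt1 by simp
qed

lemma coprime_pn_mm: "coprime (p^n) (mm0^a)"
  using not_p_dvd_mm p by (simp add: prime_imp_coprime coprime_power_left_iff coprime_power_right_iff)

lemma mm_pow_eq: "mm0^d = 1 + p^s * SS0 d"
  by (induction d) (simp_all add: SS_def mm_def algebra_simps)

lemma SS_ppow: "\<exists>y. SS0 (p^k) = p^k * y \<and> \<not> p dvd y"
proof -
  obtain y where y: "mm0^(p^k) = 1 + p^(s+k) * y" "\<not> p dvd y" using mm_pow_p by blast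
  then have "p^s * SS0 (p^k) = p^s * (p^k * y)" using mm_pow_eq[of "p^k"] by (simp add: power_add mult.assoc)
  then have "SS0 (p^k) = p^k * y" using p_gt1 by (metis mult_left_cancel not_one_less_zero power_eq_0_iff)
  then show ?thesis using y(2) by blast
qed

lemma SS_mult: "p^n dvd SS0 d \<Longrightarrow> p^n dvd SS0 (d * q)"
proof (induction q)
  case 0 then show ?case by (simp add: SS_def)
next
  case (Suc q)
  have "SS0 (d * Suc q) = SS0 (d*q) + mm0^(d*q) * SS0 d"
    using SS_add[of "d*q" d] by (simp add: algebra_simps)
  then show ?case using Suc by simp
qed

lemma SS_cancel: "p^n dvd SS0 (a + b) \<Longrightarrow> p^n dvd SS0 a \<Longrightarrow> p^n dvd SS0 b"
proof -
  assume h: "p^n dvd SS0 (a + b)" "p^n dvd SS0 a"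
  then have "p^n dvd mm0^a * SS0 b" using SS_add[of a b] by (simp add: dvd_add_right_iff)
  then show "p^n dvd SS0 b" using coprime_pn_mm coprime_dvd_mult_right_iff by blast
qed

lemma SS_gcd: "p^n dvd SS0 a \<Longrightarrow> p^n dvd SS0 b \<Longrightarrow> p^n dvd SS0 (gcd a b)"
proof (induction a b rule: gcd_nat_induct)
  case (base m) then show ?case by simp
next
  case (step m k)
  have "m = k * (m div k) + m mod k" by simp
  then have "p^n dvd SS0 (k * (m div k) + m mod k)" using step by metis
  moreover have "p^n dvd SS0 (k * (m div k))" using SS_mult step by blast
  ultimately have "p^n dvd SS0 (m mod k)" by (rule SS_cancel)
  then have "p^n dvd SS0 (gcd k (m mod k))" using step by blast
  then show ?case by (metis gcd_red_nat)
qed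

lemma SS_pn: "p^n dvd SS0 (p^n)"
  using SS_ppow[of n] by auto

lemma SS_not_dvd:
  assumes d: "0 < d" "d < p^n"
  shows "\<not> p^n dvd SS0 d"
proof
  assume h: "p^n dvd SS0 d"
  then have "p^n dvd SS0 (gcd d (p^n))" using SS_gcd SS_pn by blast
  moreover obtain i where i: "i \<le> n" "gcd d (p^n) = p^i"
    using divides_primepow_nat[OF p] gcd_dvd2 by blast
  moreover have "gcd d (p^n) \<le> d" using d by (simp add: gcd_le1_nat)
  then have "i \<noteq> n" using i d by auto
  then have "i < n" using i by auto
  moreover obtain y where "SS0 (p^i) = p^i * y" "\<not> p dvd y" using SS_ppow by blast
  ultimately have "p^n dvd p^i * y" by simp
  then have "p^(Suc i) dvd p^i * y" using \<open>i < n\<close> by (meson Suc_leI le_imp_power_dvd dvd_trans)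
  then have "p dvd y" using p_gt1 by (simp add: power_Suc)
  then show False using \<open>\<not> p dvd y\<close> by blast
qed

lemma mm_pow_mod: "mm0^(p^n) mod p^n = 1 mod p^n"
proof -
  have "p^n dvd p^s * SS0 (p^n)" using SS_pn by simp
  then obtain k where "p^s * SS0 (p^n) = p^n * k" by (auto elim: dvdE)
  then have "mm0^(p^n) = 1 + k * p^n" using mm_pow_eq[of "p^n"] by (simp add: mult.commute)
  then show ?thesis by (simp only: mod_mult_self1)
qed

lemma mm_pow_mod_red: "mm0^(a mod p^n) mod p^n = mm0^a mod p^n"
proof -
  have "mm0^a = mm0^(a mod p^n) * (mm0^(p^n))^(a div p^n)"
    by (metis div_mult_mod_eq power_add power_mult mult.commute add.commute)
  then have "mm0^a mod p^n = (mm0^(a mod p^n) * ((mm0^(p^n)) mod p^n)^(a div p^n)) mod p^n"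
    by (metis mod_mult_right_eq power_mod)
  then show ?thesis using mm_pow_mod by (simp add: mod_mult_right_eq power_mod) 
qed

end


context
  fixes f :: "'a::field \<Rightarrow> 'b::field"
  assumes fh: "field_hom f"
begin

lemma mp_coeff: "coeff (map_poly f P) i = f (coeff P i)"
  by (simp add: coeff_map_poly fh_0[OF fh])

lemma mp_add: "map_poly f (P + Q) = map_poly f P + map_poly f Q"
  by (rule poly_eqI) (simp add: mp_coeff fh_add[OF fh])

lemma mp_diff: "map_poly f (P - Q) = map_poly f P - map_poly f Q"
  by (rule poly_eqI) (simp add: mp_coeff fh_diff[OF fh])

lemma mp_mult: "map_poly f (P * Q) = map_poly f P * map_poly f Q"
  by (rule poly_eqI) (simp add: mp_coeff coeff_mult fh_sum[OF fh] fh_mult[OF fh])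

lemma mp_const: "map_poly f [:a:] = [:f a:]"
  by (rule poly_eqI) (simp add: mp_coeff fh_0[OF fh] coeff_pCons split: nat.splits)

lemma mp_monom: "map_poly f (monom a k) = monom (f a) k"
  by (rule poly_eqI) (simp add: mp_coeff fh_0[OF fh])

lemma mp_degree: "degree (map_poly f P) = degree P"
  by (rule degree_map_poly) (simp add: fh_eq0[OF fh])

lemma mp_eq0: "map_poly f P = 0 \<longleftrightarrow> P = 0"
  by (metis coeff_0 fh_eq0[OF fh] mp_coeff poly_eqI)

lemma poly_mp_sum:
  assumes "degree P < k"
  shows "poly (map_poly f P) x = (\<Sum>i<k. f (coeff P i) * x ^ i)"
proof -
  have "poly (map_poly f P) x = (\<Sum>i\<le>degree P. f (coeff P i) * x ^ i)"
    by (simp add: poly_altdef mp_degree mp_coeff)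
  also have "\<dots> = (\<Sum>i<k. f (coeff P i) * x ^ i)"
    using assms by (intro sum.mono_neutral_left) (auto simp: coeff_eq_0 fh_0[OF fh])
  finally show ?thesis .
qed

end

lemma poly_mp_hom:
  fixes g :: "'b::field \<Rightarrow> 'c::field" and f :: "'a::field \<Rightarrow> 'b"
  assumes fh: "field_hom f" and gh: "field_hom g"
  shows "g (poly (map_poly f P) x) = poly (map_poly (g \<circ> f) P) (g x)"
proof -
  have gf: "field_hom (g \<circ> f)" using field_hom_comp[OF gh fh] .
  have "g (poly (map_poly f P) x) = (\<Sum>i\<le>degree P. g (f (coeff P i)) * g x ^ i)"
    by (simp add: poly_altdef mp_degree[OF fh] fh_sum[OF gh] fh_mult[OF gh] fh_power[OF gh] mp_coeff[OF fh])
  also have "\<dots> = poly (map_poly (g \<circ> f) P) (g x)"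
    by (simp add: poly_altdef mp_degree[OF gf] mp_coeff[OF gf])
  finally show ?thesis .
qed

lemma funpow_gcd_one:
  fixes x :: "'a::field"
  shows "x ^ a = 1 \<Longrightarrow> x ^ b = 1 \<Longrightarrow> x ^ gcd a b = 1"
proof (induction a b rule: gcd_nat_induct)
  case (base m) then show ?case by simp
next
  case (step m k)
  have "x ^ m = (x ^ k) ^ (m div k) * x ^ (m mod k)"
    by (metis div_mult_mod_eq power_add power_mult mult.commute)
  then have "x ^ (m mod k) = 1" using step by simp
  then have "x ^ gcd k (m mod k) = 1" using step by blast
  then show ?case by (metis gcd_red_nat)
qed

locale ext_setup =
  fixes p s n :: nat
    and iota :: "'a::field_char_0 \<Rightarrow> 'b::field"
    and \<xi> c :: 'a
    and u :: 'b
  assumes p: "prime p"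
    and s1: "1 \<le> s" and sn: "s \<le> n" and s2: "p = 2 \<longrightarrow> s \<noteq> 1"
    and xi: "primitive_root_of_unity (p ^ s) \<xi>"
    and c0: "c \<noteq> 0"
    and fh: "field_hom iota"
    and u_pow: "u ^ (p ^ n) = iota c ^ (p ^ (n - s)) * iota \<xi>"
    and gen: "generated_field (range iota \<union> {u}) = UNIV"
    and deg: "ext_degree_is iota (p ^ n)"
begin

abbreviation N where "N \<equiv> p ^ n"
definition a0 where "a0 = c ^ (p ^ (n - s)) * \<xi>"

lemma p_gt1: "1 < p" using prime_gt_1_nat[OF p] .
lemma N_pos: "0 < N" using p_gt1 by simp
lemma N_ge2: "2 \<le> N"
proof -
  have "p ^ 1 \<le> p ^ n" using s1 sn p_gt1 by (intro power_increasing) auto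
  then show ?thesis using p_gt1 by simp
qed

lemma xi_nz: "\<xi> \<noteq> 0" using xi unfolding primitive_root_of_unity_def
  by (metis power_0_left power_eq_0_iff zero_neq_one)
lemma a0_nz: "a0 \<noteq> 0" using c0 xi_nz by (simp add: a0_def)
lemma u_N: "u ^ N = iota a0" using u_pow by (simp add: a0_def fh_mult[OF fh] fh_power[OF fh])
lemma u_nz: "u \<noteq> 0"
proof
  assume "u = 0"
  then have "iota a0 = 0" using u_N zero_power[OF N_pos] by metis
  then show False using a0_nz fh_eq0[OF fh] by blast
qed

lemmas io_0 = fh_0[OF fh] and io_1 = fh_1[OF fh] and io_add = fh_add[OF fh] and io_mult = fh_mult[OF fh]
  and io_eq0 = fh_eq0[OF fh] and io_power = fh_power[OF fh] and io_inverse = fh_inverse[OF fh]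
  and io_inj = fh_inj[OF fh] and io_uminus = fh_uminus[OF fh] and io_diff = fh_diff[OF fh]

sublocale V: vector_space "\<lambda>a (x::'b). iota a * x"
  by unfold_locales (simp_all add: algebra_simps io_add io_mult io_1)

lemma dimN: "V.dim UNIV = N"
proof -
  obtain B :: "'b set" where B: "finite B" "card B = N"
    "\<forall>a::'b \<Rightarrow> 'a. (\<Sum>b\<in>B. iota (a b) * b) = 0 \<longrightarrow> (\<forall>b\<in>B. a b = 0)"
    "\<forall>y. \<exists>a::'b \<Rightarrow> 'a. y = (\<Sum>b\<in>B. iota (a b) * b)"
    using deg unfolding ext_degree_is_def by blast
  have ind: "V.independent B"
    using B(1,3) by (auto simp: V.dependent_finite)
  have sp: "UNIV \<subseteq> V.span B"
  proof
    fix y :: 'b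
    obtain a where "y = (\<Sum>b\<in>B. iota (a b) * b)" using B(4) by blast
    have "iota (a b) * b \<in> V.span B" if "b \<in> B" for b using V.span_scale[OF V.span_base[OF that]] by simp
    then show "y \<in> V.span B" using \<open>y = _\<close> by (simp add: V.span_sum)
  qed
  show ?thesis using V.dim_unique[OF _ sp ind B(2)] by simp
qed

definition ev :: "'b \<Rightarrow> 'a poly \<Rightarrow> 'b" where "ev w P = poly (map_poly iota P) w"

lemma ev_add: "ev w (P + Q) = ev w P + ev w Q" by (simp add: ev_def mp_add[OF fh])
lemma ev_diff: "ev w (P - Q) = ev w P - ev w Q" by (simp add: ev_def mp_diff[OF fh])
lemma ev_mult: "ev w (P * Q) = ev w P * ev w Q" by (simp add: ev_def mp_mult[OF fh])
lemma ev_const: "ev w [:a:] = iota a" by (simp add: ev_def mp_const[OF fh])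
lemma ev_monom: "ev w (monom a k) = iota a * w ^ k" by (simp add: ev_def mp_monom[OF fh] poly_monom)
lemma ev_smult: "ev w (smult a P) = iota a * ev w P"
  by (simp add: ev_def map_poly_smult io_0 io_mult)
lemma ev_uminus: "ev w (- P) = - ev w P" using ev_diff[of w 0 P] by (simp add: ev_def)

definition q0 :: "'a poly" where "q0 = monom 1 N - [:a0:]"

lemma q0_degree: "degree q0 = N"
proof -
  have "degree (monom (1::'a) N) = N" by (simp add: degree_monom_eq)
  moreover have "degree [:a0:] < N" using N_pos by simp
  moreover have "q0 = monom 1 N + [:-a0:]" unfolding q0_def by simp
  ultimately show ?thesis by (simp add: degree_add_eq_left)
qed

lemma q0_nz: "q0 \<noteq> 0" using q0_degree N_pos by auto

lemma ev_q0: "w ^ N = iota a0 \<Longrightarrow> ev w q0 = 0"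
  by (simp add: q0_def ev_diff ev_monom ev_const io_1)

lemma ev_mod: "w ^ N = iota a0 \<Longrightarrow> ev w (P mod q0) = ev w P"
proof -
  assume h: "w ^ N = iota a0"
  have "ev w P = ev w ((P div q0) * q0 + P mod q0)" by simp
  also have "\<dots> = ev w (P mod q0)" by (simp only: ev_add ev_mult ev_q0[OF h]) simp
  finally show ?thesis by simp
qed

lemma deg_mod: "degree (P mod q0) < N"
  using degree_mod_less[OF q0_nz, of P] q0_degree N_pos by auto

lemma ev_sum: "degree P < N \<Longrightarrow> ev w P = (\<Sum>i<N. iota (coeff P i) * w ^ i)"
  unfolding ev_def by (rule poly_mp_sum[OF fh])

lemma rev_add: "x \<in> range (ev u) \<Longrightarrow> y \<in> range (ev u) \<Longrightarrow> x + y \<in> range (ev u)"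
proof -
  assume "x \<in> range (ev u)" "y \<in> range (ev u)"
  then obtain P Q where "x = ev u P" "y = ev u Q" by blast
  then have "x + y = ev u (P + Q)" by (simp add: ev_add)
  then show ?thesis by simp
qed

lemma rev_mult: "x \<in> range (ev u) \<Longrightarrow> y \<in> range (ev u) \<Longrightarrow> x * y \<in> range (ev u)"
proof -
  assume "x \<in> range (ev u)" "y \<in> range (ev u)"
  then obtain P Q where "x = ev u P" "y = ev u Q" by blast
  then have "x * y = ev u (P * Q)" by (simp add: ev_mult)
  then show ?thesis by simp
qed

lemma rev_uminus: "x \<in> range (ev u) \<Longrightarrow> - x \<in> range (ev u)"
proof -
  assume "x \<in> range (ev u)"
  then obtain P where "x = ev u P" by blast
  then have "- x = ev u (- P)" by (simp add: ev_uminus)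
  then show ?thesis by simp
qed

lemma rev_const: "iota a \<in> range (ev u)"
proof -
  have "iota a = ev u [:a:]" by (simp add: ev_const)
  then show ?thesis by simp
qed

definition SU :: "'b set" where "SU = (\<lambda>i. u ^ i) ` {..<N}"

lemma range_ev_span: "range (ev u) = V.span SU"
proof
  show "range (ev u) \<subseteq> V.span SU"
  proof
    fix y assume "y \<in> range (ev u)"
    then obtain P where y: "y = ev u P" by blast
    then have "y = ev u (P mod q0)" using ev_mod[OF u_N] by simp
    also have "\<dots> = (\<Sum>i<N. iota (coeff (P mod q0) i) * u ^ i)" by (rule ev_sum[OF deg_mod])
    moreover have "iota (coeff (P mod q0) i) * u ^ i \<in> V.span SU" if "i < N" for i
      using V.span_scale[OF V.span_base] that by (simp add: SU_def)
    ultimately show "y \<in> V.span SU"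
      using V.span_sum[of "{..<N}" "\<lambda>i. iota (coeff (P mod q0) i) * u ^ i" SU] by simp
  qed
next
  have "V.subspace (range (ev u))"
    unfolding V.subspace_def
  proof (intro conjI ballI allI)
    show "0 \<in> range (ev u)" using rev_const[of 0] io_0 by simp
    fix x y assume "x \<in> range (ev u)" "y \<in> range (ev u)"
    then show "x + y \<in> range (ev u)" by (rule rev_add)
  next
    fix a x assume "x \<in> range (ev u)"
    then show "iota a * x \<in> range (ev u)" using rev_mult rev_const by blast
  qed
  moreover have "SU \<subseteq> range (ev u)"
  proof -
    have "u ^ i = ev u (monom 1 i)" for i by (simp add: ev_monom io_1)
    then show ?thesis unfolding SU_def by auto
  qed
  ultimately show "V.span SU \<subseteq> range (ev u)" by (rule V.span_minimal[rotated])
qed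

lemma finite_SU: "finite SU" by (simp add: SU_def)

lemma range_ev_inverse:
  assumes y: "y \<in> range (ev u)" and y0: "y \<noteq> 0"
  shows "inverse y \<in> range (ev u)"
proof -
  have mulR: "y * z \<in> range (ev u)" if "z \<in> range (ev u)" for z
    using y that by (rule rev_mult)
  have "(\<lambda>z. y * z) ` V.span SU = V.span SU"
  proof (rule vs_inj_imp_surj_span[OF V.vector_space_axioms])
    show "\<And>x z. y * (x + z) = y * x + y * z" by (simp add: algebra_simps)
    show "\<And>a x. y * (iota a * x) = iota a * (y * x)" by (simp add: algebra_simps)
    show "finite SU" by (rule finite_SU)
    show "(\<lambda>z. y * z) ` V.span SU \<subseteq> V.span SU" using mulR range_ev_span by auto
    show "inj_on (\<lambda>z. y * z) (V.span SU)" using y0 by (auto intro: inj_onI)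
  qed
  moreover have "1 \<in> V.span SU" using range_ev_span rev_const[of 1] io_1 by simp
  ultimately obtain z where "z \<in> V.span SU" "y * z = 1" by (metis imageE)
  then have "inverse y = z" by (metis inverse_unique)
  then show ?thesis using \<open>z \<in> V.span SU\<close> range_ev_span by simp
qed

lemma range_ev: "range (ev u) = UNIV"
proof -
  have "is_subfield (range (ev u))"
    unfolding is_subfield_def
  proof (intro conjI ballI impI)
    show "0 \<in> range (ev u)" using rev_const[of 0] io_0 by simp
    show "1 \<in> range (ev u)" using rev_const[of 1] io_1 by simp
    fix x assume x: "x \<in> range (ev u)"
    then show "- x \<in> range (ev u)" by (rule rev_uminus)
    { assume "x \<noteq> 0" then show "inverse x \<in> range (ev u)" using range_ev_inverse x by blast }
    fix y assume y: "y \<in> range (ev u)"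
    show "x + y \<in> range (ev u)" using x y by (rule rev_add)
    show "x * y \<in> range (ev u)" using x y by (rule rev_mult)
  qed
  moreover have "range iota \<union> {u} \<subseteq> range (ev u)"
  proof -
    have "u = ev u (monom 1 1)" by (simp add: ev_monom io_1)
    then show ?thesis by (auto intro: ev_const[symmetric])
  qed
  ultimately have "generated_field (range iota \<union> {u}) \<subseteq> range (ev u)"
    unfolding generated_field_def by blast
  then show ?thesis using gen by auto
qed

lemma ev_surj: "\<exists>P. y = ev u P"
  using range_ev by (metis UNIV_I image_iff)

lemma SU_indep: "V.independent SU" and card_SU: "card SU = N"
proof -
  have spU: "V.span SU = UNIV" using range_ev range_ev_span by simp
  obtain C where C: "C \<subseteq> V.span SU" "V.independent C" "V.span SU \<subseteq> V.span C" "card C = V.dim (V.span SU)"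
    using V.basis_exists by blast
  have "C \<subseteq> SU \<or> True" by simp
  have cardC: "card C = N" using C(4) spU dimN by simp
  have "card SU \<le> N" unfolding SU_def using card_image_le[of "{..<N}" "\<lambda>i. u^i"] by simp
  moreover have "finite C" using V.independent_span_bound[OF finite_SU C(2)] C(1) by auto
  moreover have "N \<le> card SU" using V.independent_span_bound[OF finite_SU C(2)] C(1) cardC by auto
  ultimately have cSU: "card SU = N" by simp
  then show "card SU = N" .
  show "V.independent SU"
  proof
    assume "V.dependent SU"
    then obtain a where a: "a \<in> SU" "a \<in> V.span (SU - {a})" using V.dependent_def by blast
    then have "V.span (SU - {a}) = V.span SU"
      by (metis V.span_redundant insert_Diff)
    then have "V.dim UNIV \<le> card (SU - {a})"
      using V.dim_le_card[of UNIV "SU - {a}"] spU finite_SU by auto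
    also have "\<dots> < N" using card_Diff1_less[OF finite_SU a(1)] cSU by simp
    finally show False using dimN by simp
  qed
qed

lemma inj_upow: "inj_on (\<lambda>i. u ^ i) {..<N}"
  using card_SU unfolding SU_def by (simp add: inj_on_iff_eq_card)

lemma coord_zero:
  assumes "(\<Sum>i<N. iota (a i) * u ^ i) = 0" "i < N"
  shows "a i = 0"
proof -
  define g where "g = the_inv_into {..<N} (\<lambda>i. u ^ i)"
  have "(\<Sum>v\<in>SU. iota (a (g v)) * v) = (\<Sum>i<N. iota (a (g (u^i))) * u ^ i)"
    unfolding SU_def by (simp add: sum.reindex[OF inj_upow])
  also have "\<dots> = (\<Sum>i<N. iota (a i) * u ^ i)"
    by (intro sum.cong refl) (simp add: g_def the_inv_into_f_f[OF inj_upow])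
  finally have "(\<Sum>v\<in>SU. iota (a (g v)) * v) = 0" using assms(1) by simp
  then have "\<forall>v\<in>SU. a (g v) = 0" using SU_indep finite_SU by (auto simp: V.dependent_finite)
  then have "a (g (u ^ i)) = 0" using assms(2) by (simp add: SU_def)
  then show ?thesis by (simp add: g_def the_inv_into_f_f[OF inj_upow] assms(2))
qed

lemma ev_kernel: "ev u P = 0 \<Longrightarrow> q0 dvd P"
proof -
  assume h: "ev u P = 0"
  have "(\<Sum>i<N. iota (coeff (P mod q0) i) * u ^ i) = 0"
    using ev_sum[OF deg_mod, of u P] ev_mod[OF u_N, of P] h by simp
  then have "\<forall>i<N. coeff (P mod q0) i = 0" using coord_zero by blast
  then have "P mod q0 = 0" using deg_mod[of P] by (metis coeff_eq_0 leading_coeff_0_iff not_less)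
  then show "q0 dvd P" by (simp add: mod_eq_0_iff_dvd)
qed

lemma ev_eq_imp: "ev u P = ev u Q \<Longrightarrow> w ^ N = iota a0 \<Longrightarrow> ev w P = ev w Q"
proof -
  assume "ev u P = ev u Q" "w ^ N = iota a0"
  then have "q0 dvd P - Q" using ev_kernel ev_diff by (metis right_minus_eq)
  then obtain R where "P - Q = q0 * R" by (auto elim: dvdE)
  then have "ev w (P - Q) = 0" using ev_mult ev_q0[OF \<open>w ^ N = iota a0\<close>] by simp
  then show "ev w P = ev w Q" by (simp add: ev_diff)
qed

end


context ext_setup
begin

abbreviation m where "m \<equiv> mm p s"
abbreviation S where "S \<equiv> SS p s"

lemmas C_ctx = p s1 s2
lemma SS_add': "S (a + b) = S a + m ^ a * S b" using SS_add[OF C_ctx] .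
lemma mm_def': "m = p ^ s + 1" by (simp add: mm_def)
lemma SS_def': "S d = (\<Sum>j<d. m ^ j)" by (simp add: SS_def)

lemma xi_pow: "\<xi> ^ (p ^ s) = 1" using xi by (simp add: primitive_root_of_unity_def)

lemma pow_split: "p ^ (n - s) * p ^ s = N" using sn by (simp add: power_add[symmetric])

lemma iota_c_nz: "iota c \<noteq> 0" using c0 io_eq0 by simp

definition w0 :: 'b where "w0 = inverse (iota c) * u ^ (p ^ s + 1)"
definition zeta :: 'b where "zeta = inverse (iota c) * u ^ (p ^ s)"

lemma w0_zeta: "w0 = zeta * u" by (simp add: w0_def zeta_def)

lemma a0_pow: "iota a0 ^ (p ^ s) = iota c ^ N"
proof -
  have "iota a0 ^ (p ^ s) = iota c ^ (p ^ (n - s) * p ^ s) * iota (\<xi> ^ (p ^ s))"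
    by (simp add: a0_def io_mult io_power power_mult power_mult_distrib)
  then show ?thesis using pow_split xi_pow io_1 by simp
qed

lemma zeta_N: "zeta ^ N = 1"
proof -
  have "zeta ^ N = inverse (iota c) ^ N * (u ^ N) ^ (p ^ s)"
    by (simp add: zeta_def power_mult_distrib power_mult[symmetric] mult.commute)
  also have "\<dots> = 1" using u_N a0_pow iota_c_nz by (simp add: power_inverse)
  finally show ?thesis .
qed

lemma w0_N: "w0 ^ N = iota a0"
  using zeta_N u_N by (simp add: w0_zeta power_mult_distrib)

lemma zeta_pn1: "zeta ^ (p ^ (n - 1)) = iota (\<xi> ^ (p ^ (s - 1)))"
proof -
  have e1: "p ^ s * p ^ (n - 1) = p ^ (s - 1) * N"
    using s1 sn by (simp add: power_add[symmetric])
  have e2: "p ^ (n - s) * p ^ (s - 1) = p ^ (n - 1)"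
    using s1 sn by (simp add: power_add[symmetric])
  have "zeta ^ (p ^ (n - 1)) = inverse (iota c) ^ (p ^ (n - 1)) * u ^ (p ^ s * p ^ (n - 1))"
    by (simp add: zeta_def power_mult_distrib power_mult[symmetric])
  also have "u ^ (p ^ s * p ^ (n - 1)) = iota a0 ^ (p ^ (s - 1))"
    by (simp only: e1 mult.commute[of "p^(s-1)"] power_mult u_N)
  also have "iota a0 ^ (p ^ (s - 1)) = iota c ^ (p ^ (n - 1)) * iota (\<xi> ^ (p ^ (s - 1)))"
    unfolding e2[symmetric] by (simp add: a0_def io_mult io_power power_mult power_mult_distrib)
  finally show ?thesis using iota_c_nz by (simp add: power_inverse)
qed

lemma zeta_pn1_ne: "zeta ^ (p ^ (n - 1)) \<noteq> 1"
proof
  assume "zeta ^ (p ^ (n - 1)) = 1"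
  then have "iota (\<xi> ^ (p ^ (s - 1))) = iota 1" using zeta_pn1 io_1 by simp
  then have "\<xi> ^ (p ^ (s - 1)) = 1" using io_inj by (simp add: inj_eq)
  moreover have "0 < p ^ (s - 1)" "p ^ (s - 1) < p ^ s" using p_gt1 s1
    by (auto intro: power_strict_increasing)
  ultimately show False using xi unfolding primitive_root_of_unity_def by blast
qed

lemma zeta_order: "zeta ^ k = 1 \<Longrightarrow> N dvd k"
proof -
  assume h: "zeta ^ k = 1"
  have g: "zeta ^ gcd k N = 1" using funpow_gcd_one[OF h zeta_N] .
  obtain i where i: "i \<le> n" "gcd k N = p ^ i" using divides_primepow_nat[OF p] gcd_dvd2 by blast
  show "N dvd k"
  proof (cases "i = n")
    case True then show ?thesis using i by (metis gcd_dvd1)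
  next
    case False
    then have "i \<le> n - 1" using i by auto
    then have "p ^ i dvd p ^ (n - 1)" by (rule le_imp_power_dvd)
    then obtain j where "p ^ (n - 1) = p ^ i * j" by (auto elim: dvdE)
    then have "zeta ^ (p ^ (n - 1)) = 1" using g i by (simp add: power_mult)
    then show ?thesis using zeta_pn1_ne by simp
  qed
qed

definition sig :: "'b \<Rightarrow> 'b" where "sig y = ev w0 (SOME P. y = ev u P)"

lemma sig_ev: "sig (ev u P) = ev w0 P"
proof -
  have "\<exists>Q. ev u P = ev u Q" by blast
  then have "ev u P = ev u (SOME Q. ev u P = ev u Q)" by (rule someI_ex)
  then show ?thesis unfolding sig_def using ev_eq_imp w0_N by metis
qed

lemma sig_fh: "field_hom sig"
  unfolding field_hom_def
proof (intro conjI allI)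
  show "sig 1 = 1" using sig_ev[of "[:1:]"] by (simp add: ev_const io_1)
  fix x y
  obtain P Q where "x = ev u P" "y = ev u Q" using ev_surj by blast
  then show "sig (x + y) = sig x + sig y" "sig (x * y) = sig x * sig y"
    by (simp_all add: ev_add[symmetric] ev_mult[symmetric] sig_ev)
qed

lemma sig_iota: "sig (iota a) = iota a"
  using sig_ev[of "[:a:]"] by (simp add: ev_const)

lemma sig_u: "sig u = w0"
  using sig_ev[of "monom 1 1"] by (simp add: ev_monom io_1)

lemma hom_ev:
  assumes "field_hom g" "\<And>a. g (iota a) = iota a"
  shows "g (ev u P) = ev (g u) P"
proof -
  have "g \<circ> iota = iota" using assms(2) by auto
  then show ?thesis unfolding ev_def using poly_mp_hom[OF fh assms(1)] by simp
qed

lemma hom_ext: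
  assumes "field_hom g" "\<And>a. g (iota a) = iota a" "field_hom h" "\<And>a. h (iota a) = iota a" "g u = h u"
  shows "g = h"
proof
  fix y obtain P where "y = ev u P" using ev_surj by blast
  then show "g y = h y" using hom_ev[OF assms(1,2)] hom_ev[OF assms(3,4)] assms(5) by simp
qed

lemma sigp_fh: "field_hom (sig ^^ r)" using field_hom_funpow[OF sig_fh] .

lemma sigp_iota: "(sig ^^ r) (iota a) = iota a"
  by (induction r) (simp_all add: sig_iota)

lemma sig_zeta: "sig zeta = zeta ^ m"
proof -
  have "sig zeta = inverse (iota c) * (zeta * u) ^ (p ^ s)"
    using sig_iota[of c] sig_u fh_mult[OF sig_fh] fh_power[OF sig_fh] fh_inverse[OF sig_fh]
    by (simp add: zeta_def w0_zeta)
  also have "\<dots> = zeta ^ (p ^ s) * zeta" by (simp add: zeta_def power_mult_distrib)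
  finally show ?thesis by (simp add: mm_def')
qed

lemma S1: "S 1 = 1" by (simp add: SS_def')

lemma sigp_u: "(sig ^^ r) u = zeta ^ (S r) * u"
proof (induction r)
  case 0 then show ?case by (simp add: SS_def')
next
  case (Suc r)
  have "(sig ^^ Suc r) u = sig (zeta ^ (S r) * u)" using Suc by simp
  also have "\<dots> = (zeta ^ m) ^ (S r) * (zeta * u)"
    using fh_mult[OF sig_fh] fh_power[OF sig_fh] sig_zeta sig_u w0_zeta by simp
  also have "\<dots> = zeta ^ (S (Suc r)) * u"
    using SS_add'[of 1 r] S1 by (simp add: power_mult[symmetric] power_add)
  finally show ?case .
qed

lemma N_not_dvd: "0 < d \<Longrightarrow> d < N \<Longrightarrow> \<not> N dvd S d"
  using SS_not_dvd[OF C_ctx] by blast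

lemma sigp_u_inj: "r < N \<Longrightarrow> r' < N \<Longrightarrow> (sig ^^ r) u = (sig ^^ r') u \<Longrightarrow> r = r'"
proof -
  have main: "r < r' \<Longrightarrow> r' < N \<Longrightarrow> (sig ^^ r) u = (sig ^^ r') u \<Longrightarrow> False" for r r'
  proof -
    assume h: "r < r'" "r' < N" "(sig ^^ r) u = (sig ^^ r') u"
    define d where "d = r' - r"
    have rr: "r' = r + d" using h by (simp add: d_def)
    have z0: "zeta \<noteq> 0" using zeta_N N_pos by (metis zero_neq_one zero_power)
    have "zeta ^ (S r) * u = zeta ^ (S r) * zeta ^ (m ^ r * S d) * u"
      using h(3) by (simp add: sigp_u rr SS_add' power_add)
    then have "zeta ^ (m ^ r * S d) = 1" using u_nz z0 by simp
    then have "N dvd m ^ r * S d" by (rule zeta_order)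
    then have "N dvd S d" using coprime_pn_mm[OF C_ctx] coprime_dvd_mult_right_iff by blast
    moreover have "0 < d" "d < N" using h by (auto simp: d_def)
    ultimately show False using N_not_dvd by blast
  qed
  assume "r < N" "r' < N" "(sig ^^ r) u = (sig ^^ r') u"
  then show "r = r'" using main[of r r'] main[of r' r] by (metis linorder_neqE_nat)
qed

lemma sigp_N: "sig ^^ N = id"
proof (rule hom_ext[OF sigp_fh sigp_iota field_hom_id])
  show "\<And>a. id (iota a) = iota a" by simp
  have "N dvd S N" using SS_pn[OF C_ctx] .
  then obtain k where "S N = N * k" by (auto elim: dvdE)
  then have "zeta ^ (S N) = 1" using zeta_N by (simp add: power_mult)
  then show "(sig ^^ N) u = id u" by (simp add: sigp_u)
qed

lemma sigp_mod: "sig ^^ (r mod N) = sig ^^ r"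
proof -
  have "sig ^^ r = (sig ^^ (r mod N)) \<circ> ((sig ^^ N) ^^ (r div N))"
    by (metis div_mult_mod_eq funpow_add funpow_mult add.commute mult.commute)
  moreover have "(id ^^ k) = (id::'b \<Rightarrow> 'b)" for k by (induction k) auto
  ultimately show ?thesis using sigp_N by simp
qed

end


context ext_setup
begin

lemma sigp_comp: "(sig ^^ a) ((sig ^^ b) y) = (sig ^^ (a + b)) y"
  by (simp add: funpow_add)

lemma sigp_bij: "bij (sig ^^ r)"
proof (rule bijI)
  show "inj (sig ^^ r)" using fh_inj[OF sigp_fh] .
  show "surj (sig ^^ r)"
  proof (rule surjI)
    fix y
    have "1 \<le> N" using N_pos by linarith
    then have "1 * r \<le> N * r" by (rule mult_le_mono1)
    then have "r + (N * r - r) = N * r" by simp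
    then have "(sig ^^ r) ((sig ^^ (N * r - r)) y) = (sig ^^ (N * r)) y"
      by (simp add: sigp_comp)
    also have "sig ^^ (N * r) = (sig ^^ N) ^^ r" by (simp add: funpow_mult)
    also have "\<dots> = id" by (simp add: sigp_N)
    finally show "(sig ^^ r) ((sig ^^ (N * r - r)) y) = y" by simp
  qed
qed

lemma sigp_aut: "galois_aut iota (sig ^^ r)"
  unfolding galois_aut_def using sigp_bij sigp_fh sigp_iota by blast

lemma sig_aut: "galois_aut iota sig"
  using sigp_aut[of 1] by simp

definition Qr :: "'b poly" where "Qr = monom 1 N - [:iota a0:]"

lemma Qr_nz: "Qr \<noteq> 0" and Qr_deg: "degree Qr = N"
proof -
  have "degree (monom (1::'b) N) = N" by (simp add: degree_monom_eq)
  moreover have "degree [:- iota a0:] < N" using N_pos by simp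
  moreover have "Qr = monom 1 N + [:- iota a0:]" unfolding Qr_def by simp
  ultimately show "degree Qr = N" by (simp add: degree_add_eq_left)
  then show "Qr \<noteq> 0" using N_pos by auto
qed

lemma Qr_root: "poly Qr x = 0 \<longleftrightarrow> x ^ N = iota a0"
  by (simp add: Qr_def poly_monom)

definition Rs where "Rs = (\<lambda>r. (sig ^^ r) u) ` {..<N}"

lemma inj_sigp_u: "inj_on (\<lambda>r. (sig ^^ r) u) {..<N}"
  using sigp_u_inj by (auto intro: inj_onI)

lemma card_Rs: "card Rs = N"
  unfolding Rs_def using inj_sigp_u by (simp add: card_image)

lemma sigp_u_N: "((sig ^^ r) u) ^ N = iota a0"
  using fh_power[OF sigp_fh, where x=u and n=N] u_N sigp_iota by simp

lemma roots_eq: "{x. poly Qr x = 0} = Rs"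
proof -
  have fin: "finite {x. poly Qr x = 0}" using poly_roots_finite[OF Qr_nz] .
  have sub: "Rs \<subseteq> {x. poly Qr x = 0}" unfolding Rs_def using sigp_u_N Qr_root by auto
  have "card {x. poly Qr x = 0} \<le> N" using card_poly_roots_bound[OF Qr_nz] Qr_deg by (rule ord_le_eq_trans)
  moreover have "card Rs \<le> card {x. poly Qr x = 0}" by (rule card_mono[OF fin sub])
  ultimately have "card Rs = card {x. poly Qr x = 0}" using card_Rs by linarith
  then show ?thesis by (rule card_subset_eq[OF fin sub, symmetric])
qed

lemma galois_group_eq: "galois_group iota = {sig ^^ i | i. i < N}"
proof
  show "{sig ^^ i | i. i < N} \<subseteq> galois_group iota"
    using sigp_aut by (auto simp: galois_group_def)
  show "galois_group iota \<subseteq> {sig ^^ i | i. i < N}"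
  proof
    fix g assume "g \<in> galois_group iota"
    then have g: "bij g" "field_hom g" "\<And>a. g (iota a) = iota a"
      by (auto simp: galois_group_def galois_aut_def)
    have "(g u) ^ N = iota a0" using fh_power[OF g(2), where x=u and n=N] u_N g(3) by simp
    then have "g u \<in> Rs" using roots_eq Qr_root by blast
    then obtain i where i: "i < N" "g u = (sig ^^ i) u" unfolding Rs_def by auto
    have "g = sig ^^ i" using hom_ext[OF g(2,3) sigp_fh sigp_iota i(2)] .
    then show "g \<in> {sig ^^ i | i. i < N}" using i(1) by blast
  qed
qed

lemma card_galois: "card (galois_group iota) = N"
proof -
  have "{sig ^^ i | i. i < N} = (\<lambda>i. sig ^^ i) ` {..<N}" by auto
  moreover have "inj_on (\<lambda>i. sig ^^ i) {..<N}"
  proof (rule inj_onI)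
    fix i j assume "i \<in> {..<N}" "j \<in> {..<N}" "sig ^^ i = sig ^^ j"
    then show "i = j" using sigp_u_inj[of i j] by simp
  qed
  ultimately show ?thesis using galois_group_eq by (simp add: card_image)
qed

lemma sig_u_formula: "sig u = inverse (iota c) * u ^ (p ^ s + 1)"
  by (simp add: sig_u w0_def)

lemma sigp_u_ne: "0 < i \<Longrightarrow> i < N \<Longrightarrow> (sig ^^ i) u \<noteq> u"
  using sigp_u_inj[of i 0] N_pos by auto

lemma fixed_iota:
  assumes "sig y = y"
  shows "\<exists>a. y = iota a"
proof -
  obtain P0 where "y = ev u P0" using ev_surj by blast
  then have y: "y = ev u (P0 mod q0)" using ev_mod[OF u_N] by simp
  define P where "P = P0 mod q0"
  have dP: "degree P < N" using deg_mod by (simp add: P_def)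
  have fix_all: "(sig ^^ r) y = y" for r by (induction r) (simp_all add: assms)
  define Z where "Z = map_poly iota P - [:y:]"
  have "degree Z < N"
    unfolding Z_def using dP mp_degree[OF fh] N_pos by (intro degree_diff_less) auto
  have roots: "Rs \<subseteq> {x. poly Z x = 0}"
  proof
    fix x assume "x \<in> Rs"
    then obtain r where x: "x = (sig ^^ r) u" unfolding Rs_def by auto
    have "(sig ^^ r) y = ev x P" using hom_ev[OF sigp_fh sigp_iota] y x P_def by simp
    then show "x \<in> {x. poly Z x = 0}" using fix_all by (simp add: Z_def ev_def)
  qed
  have "Z = 0"
  proof (rule ccontr)
    assume "Z \<noteq> 0"
    then have "card {x. poly Z x = 0} \<le> degree Z" by (rule card_poly_roots_bound)
    moreover have "card Rs \<le> card {x. poly Z x = 0}"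
      using roots poly_roots_finite[OF \<open>Z \<noteq> 0\<close>] by (rule card_mono[rotated])
    ultimately show False using card_Rs \<open>degree Z < N\<close> by simp
  qed
  then have "map_poly iota P = [:y:]" unfolding Z_def by simp
  then have "coeff (map_poly iota P) 0 = y" by simp
  then have "iota (coeff P 0) = y" by (simp add: mp_coeff[OF fh])
  then show ?thesis by blast
qed

lemma sigp_u_formula: "(sig ^^ b) u = iota (inverse c ^ S b) * u ^ (m ^ b)"
proof -
  have "(sig ^^ b) u = zeta ^ S b * u" by (rule sigp_u)
  also have "\<dots> = inverse (iota c) ^ S b * u ^ (p ^ s * S b + 1)"
    by (simp add: zeta_def power_mult_distrib power_mult)
  also have "p ^ s * S b + 1 = m ^ b" using mm_pow_eq[OF C_ctx, of b] by simp
  finally show ?thesis by (simp add: io_power io_inverse)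
qed

end


lemma sum_fun_apply: "(\<Sum>i\<in>A. f i) x = (\<Sum>i\<in>A. f i x)"
  by (induction A rule: infinite_finite_induct) auto

definition mono :: "nat \<Rightarrow> 'b::field fls \<Rightarrow> (nat \<Rightarrow> 'b fls)" where
  "mono i a = (\<lambda>k. if k = i then a else 0)"

lemma div_add_split: "(a + b) div (N::nat) = a div N + (a mod N + b) div N"
proof (cases "N = 0")
  case False
  have "a + b = (a mod N + b) + N * (a div N)" by simp
  then show ?thesis using False by (metis div_mult_self2 add.commute)
qed simp

lemma if_add0: "(if c then a + b else 0) = (if c then a else 0) + (if c then b else (0::'a::monoid_add))"
  by simp

lemma dsum: "i < N \<Longrightarrow> j < N \<Longrightarrow> (\<Sum>i'<N. \<Sum>j'<(N::nat). if i' = i \<and> j' = j then V else (0::'c::comm_monoid_add)) = V"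
proof -
  assume "i < N" "j < N"
  have "(\<Sum>j'<N. if i' = i \<and> j' = j then V else 0) = (if i' = i then V else 0)" for i'
    using \<open>j < N\<close> by (cases "i' = i") (simp_all add: sum.delta)
  then show ?thesis using \<open>i < N\<close> by (simp add: sum.delta)
qed

context
  fixes N :: nat and \<sigma> :: "'b::field \<Rightarrow> 'b"
  assumes N_pos: "0 < N" and sfh: "field_hom \<sigma>" and sN: "\<sigma> ^^ N = id"
begin

abbreviation T where "T i \<equiv> fls_cmap (\<sigma> ^^ i)"

lemma Tfh: "field_hom (\<sigma> ^^ i)" by (rule field_hom_funpow[OF sfh])

lemma sig_mod: "\<sigma> ^^ (i mod N) = \<sigma> ^^ i"
proof -
  have "\<sigma> ^^ i = (\<sigma> ^^ (i mod N)) \<circ> ((\<sigma> ^^ N) ^^ (i div N))"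
    by (metis div_mult_mod_eq funpow_add funpow_mult add.commute mult.commute)
  then show ?thesis using sN by simp
qed

lemma T_comp: "T i (T j a) = T (i + j) a"
  by (simp add: cmap_comp[symmetric] fh_0[OF Tfh] funpow_add)

lemma T_mult: "T i (a * b) = T i a * T i b" by (rule cmap_mult[OF Tfh])
lemma T_add: "T i (a + b) = T i a + T i b" by (rule cmap_add[OF Tfh])
lemma T_0: "T i 0 = 0" by (rule cmap_0[OF Tfh])
lemma T_X: "T i fls_X = fls_X" by (rule cmap_X[OF Tfh])
lemma T_Xp: "T i (fls_X ^ e) = fls_X ^ e" by (simp add: cmap_power[OF Tfh] T_X)
lemma T_1: "T i 1 = 1" by (rule cmap_1[OF Tfh])
lemma T_const: "T i (fls_const a) = fls_const ((\<sigma> ^^ i) a)" by (rule cmap_const[OF Tfh])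

lemma X_if: "i < N \<Longrightarrow> j < N \<Longrightarrow> (if N \<le> i + j then fls_X else 1) = (fls_X::'b fls) ^ ((i + j) div N)"
proof -
  assume "i < N" "j < N"
  then have "i + j < 2 * N" by simp
  then have "(i + j) div N < 2" by (simp add: div_less_iff_less_mult mult.commute)
  moreover have "N \<le> i + j \<longleftrightarrow> 0 < (i + j) div N" using N_pos by (simp add: div_greater_zero_iff)
  ultimately show ?thesis by (cases "(i + j) div N") auto
qed

abbreviation cm where "cm \<equiv> cyc_mult N \<sigma>"

lemma cm_zero_left: "cm 0 y = 0"
  apply (rule ext)
  apply (unfold cyc_mult_def)
  apply (simp only: zero_fun_apply mult_zero_right mult_zero_left if_cancel sum.neutral_const)
  done

lemma cm_zero_right: "cm x 0 = 0"
  apply (rule ext)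
  apply (unfold cyc_mult_def)
  apply (simp only: zero_fun_apply T_0 mult_zero_right mult_zero_left if_cancel sum.neutral_const)
  done

lemma cm_add_left: "cm (x + y) z = cm x z + cm y z"
  apply (rule ext)
  apply (unfold cyc_mult_def)
  apply (simp only: plus_fun_apply distrib_left distrib_right if_add0 sum.distrib)
  done

lemma cm_add_right: "cm x (y + z) = cm x y + cm x z"
  apply (rule ext)
  apply (unfold cyc_mult_def)
  apply (simp only: plus_fun_apply T_add distrib_left distrib_right if_add0 sum.distrib)
  done

lemma cm_sum_left: "cm (\<Sum>i\<in>A. X i) y = (\<Sum>i\<in>A. cm (X i) y)"
proof (induction A rule: infinite_finite_induct)
  case (infinite A) then show ?case by (simp add: cm_zero_left[unfolded zero_fun_def])
next
  case empty then show ?case by (simp only: sum.empty cm_zero_left)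
next
  case (insert a F)
  have e1: "sum X (insert a F) = X a + sum X F" using insert(1,2) by (rule sum.insert)
  have e2: "(\<Sum>i\<in>insert a F. cm (X i) y) = cm (X a) y + (\<Sum>i\<in>F. cm (X i) y)" using insert(1,2) by (rule sum.insert)
  show ?case unfolding e1 e2 cm_add_left insert(3) ..
qed

lemma cm_sum_right: "cm x (\<Sum>i\<in>A. Y i) = (\<Sum>i\<in>A. cm x (Y i))"
proof (induction A rule: infinite_finite_induct)
  case (infinite A) then show ?case by (simp add: cm_zero_right[unfolded zero_fun_def])
next
  case empty then show ?case by (simp only: sum.empty cm_zero_right)
next
  case (insert a F)
  have e1: "sum Y (insert a F) = Y a + sum Y F" using insert(1,2) by (rule sum.insert)
  have e2: "(\<Sum>i\<in>insert a F. cm x (Y i)) = cm x (Y a) + (\<Sum>i\<in>F. cm x (Y i))" using insert(1,2) by (rule sum.insert)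
  show ?case unfolding e1 e2 cm_add_right insert(3) ..
qed

lemma cm_mono:
  assumes "i < N" "j < N"
  shows "cm (mono i a) (mono j b) = mono ((i + j) mod N) (fls_X ^ ((i + j) div N) * a * T i b)"
proof (rule ext)
  fix k
  define W where "W = (if N \<le> i + j then fls_X else 1) * a * T i b"
  have eq: "(\<Sum>i'<N. \<Sum>j'<N. if (i' + j') mod N = k
          then (if N \<le> i' + j' then fls_X else 1) * mono i a i' * T i' (mono j b j') else 0)
       = (\<Sum>i'<N. \<Sum>j'<N. if i' = i \<and> j' = j then (if (i + j) mod N = k
          then W else 0) else 0)"
    unfolding W_def by (intro sum.cong refl) (auto simp: mono_def T_0)
  also have "\<dots> = (if (i + j) mod N = k then W else 0)"
    using assms by (rule dsum)
  finally have eq2: "cm (mono i a) (mono j b) k = (if k < N then (if (i + j) mod N = k then W else 0) else 0)"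
    by (simp only: cyc_mult_def)
  have "(i + j) mod N < N" using N_pos by simp
  then have "mono ((i + j) mod N) W k = (if k < N then (if (i + j) mod N = k then W else 0) else 0)"
    unfolding mono_def by auto
  then have "cm (mono i a) (mono j b) k = mono ((i + j) mod N) W k"
    using eq2 by simp
  then show "cm (mono i a) (mono j b) k = mono ((i + j) mod N) (fls_X ^ ((i + j) div N) * a * T i b) k"
    unfolding W_def X_if[OF assms] .
qed

lemma decomp: "x \<in> cyc_carrier N \<Longrightarrow> x = (\<Sum>i<N. mono i (x i))"
proof (rule ext)
  fix k assume x: "x \<in> cyc_carrier N"
  have "(\<Sum>i<N. mono i (x i)) k = (\<Sum>i<N. if k = i then x i else 0)"
    by (simp add: mono_def sum_fun_apply)
  also have "\<dots> = (if k < N then x k else 0)" by (simp add: sum.delta)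
  also have "\<dots> = x k" using x by (auto simp: cyc_carrier_def)
  finally show "x k = (\<Sum>i<N. mono i (x i)) k" by simp
qed

lemma cm_assoc_mono:
  assumes "i < N" "j < N" "l < N"
  shows "cm (cm (mono i a) (mono j b)) (mono l c) = cm (mono i a) (cm (mono j b) (mono l c))"
proof -
  have m1: "(i + j) mod N < N" "(j + l) mod N < N" using N_pos by auto
  have idx: "((i + j) mod N + l) mod N = (i + (j + l) mod N) mod N"
    by (simp add: mod_add_left_eq mod_add_right_eq add.assoc)
  have ex: "((i + j) mod N + l) div N + (i + j) div N = (i + (j + l) mod N) div N + (j + l) div N"
  proof -
    have e1: "(i + j + l) div N = (i + j) div N + ((i + j) mod N + l) div N" by (rule div_add_split)
    have e2: "(j + l + i) div N = (j + l) div N + ((j + l) mod N + i) div N" by (rule div_add_split)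
    have e3: "(i + j + l) div N = (j + l + i) div N" by (simp add: add_ac)
    have e4: "(i + (j + l) mod N) div N = ((j + l) mod N + i) div N" by (simp add: add.commute)
    show ?thesis using e1 e2 e3 e4 by linarith
  qed
  have Tm: "T ((i + j) mod N) c = T (i + j) c" by (simp add: sig_mod)
  have "cm (cm (mono i a) (mono j b)) (mono l c) =
        mono ((i + (j + l) mod N) mod N) (fls_X ^ (((i + j) mod N + l) div N + (i + j) div N) * a * T i b * T (i + j) c)"
    using assms m1 by (simp add: cm_mono Tm idx power_add mult_ac)
  also have "\<dots> = mono ((i + (j + l) mod N) mod N) (fls_X ^ ((i + (j + l) mod N) div N + (j + l) div N) * a * T i b * T (i + j) c)"
    by (simp only: ex)
  also have "\<dots> = cm (mono i a) (cm (mono j b) (mono l c))"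
    using assms m1 by (simp add: cm_mono T_mult T_Xp T_comp power_add mult_ac)
  finally show ?thesis .
qed

lemma cm_sum2: "cm (\<Sum>i\<in>I. A i) (\<Sum>j\<in>J. B j) = (\<Sum>i\<in>I. \<Sum>j\<in>J. cm (A i) (B j))"
  unfolding cm_sum_left unfolding cm_sum_right ..

lemma cm_assoc:
  assumes "x \<in> cyc_carrier N" "y \<in> cyc_carrier N" "z \<in> cyc_carrier N"
  shows "cm (cm x y) z = cm x (cm y z)"
proof -
  define A where "A i = mono i (x i)" for i
  define B where "B i = mono i (y i)" for i
  define C where "C i = mono i (z i)" for i
  have x: "x = (\<Sum>i<N. A i)" using decomp[OF assms(1)] by (simp add: A_def)
  have y: "y = (\<Sum>i<N. B i)" using decomp[OF assms(2)] by (simp add: B_def)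
  have z: "z = (\<Sum>i<N. C i)" using decomp[OF assms(3)] by (simp add: C_def)
  have "cm (cm x y) z = cm (\<Sum>i<N. \<Sum>j<N. cm (A i) (B j)) (\<Sum>l<N. C l)"
    unfolding x y z cm_sum2 ..
  also have "\<dots> = (\<Sum>i<N. \<Sum>j<N. \<Sum>l<N. cm (cm (A i) (B j)) (C l))"
    by (simp only: cm_sum_left) (simp only: cm_sum_right)
  also have "\<dots> = (\<Sum>i<N. \<Sum>j<N. \<Sum>l<N. cm (A i) (cm (B j) (C l)))"
    by (intro sum.cong refl) (simp add: A_def B_def C_def cm_assoc_mono)
  also have "\<dots> = cm (\<Sum>i<N. A i) (\<Sum>j<N. \<Sum>l<N. cm (B j) (C l))"
    by (simp only: cm_sum_left) (simp only: cm_sum_right)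
  also have "\<dots> = cm x (cm y z)"
    unfolding x y z cm_sum2 ..
  finally show ?thesis .
qed

lemma cm_carrier: "cm x y \<in> cyc_carrier N"
  by (simp add: cyc_carrier_def cyc_mult_def)

lemma one_mono: "cyc_one = mono 0 1"
  by (rule ext) (simp add: cyc_one_def mono_def)

lemma one_carrier: "cyc_one \<in> cyc_carrier N"
  using N_pos by (simp add: cyc_carrier_def cyc_one_def)

lemma cm_one_right:
  assumes "x \<in> cyc_carrier N"
  shows "cm x cyc_one = x"
proof -
  have "cm x cyc_one = (\<Sum>i<N. cm (mono i (x i)) (mono 0 1))"
    by (subst decomp[OF assms]) (simp only: one_mono cm_sum_left)
  also have "\<dots> = (\<Sum>i<N. mono i (x i))"
    using N_pos by (intro sum.cong refl) (simp add: cm_mono T_1)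
  also have "\<dots> = x" using decomp[OF assms] by simp
  finally show ?thesis .
qed

lemma cm_one_left:
  assumes "x \<in> cyc_carrier N"
  shows "cm cyc_one x = x"
proof -
  have "cm cyc_one x = (\<Sum>i<N. cm (mono 0 1) (mono i (x i)))"
    by (subst decomp[OF assms]) (simp only: one_mono cm_sum_right)
  also have "\<dots> = (\<Sum>i<N. mono i (x i))"
    using N_pos by (intro sum.cong refl) (simp add: cm_mono)
  also have "\<dots> = x" using decomp[OF assms] by simp
  finally show ?thesis .
qed

lemma cm_scal_left:
  shows "cm (\<lambda>k. \<kappa> * x k) y = (\<lambda>k. \<kappa> * cm x y k)"
proof -
  have h: "(if c then E * (\<kappa> * a) * t else 0) = \<kappa> * (if c then E * a * t else (0::'b fls))" for c E a t
    by (simp add: mult_ac)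
  have h2: "(if P then \<kappa> * S else 0) = \<kappa> * (if P then S else (0::'b fls))" for P S
    by simp
  show ?thesis
    by (rule ext) (simp only: cyc_mult_def h sum_distrib_left[symmetric] h2)
qed

lemma cm_scal_right:
  assumes "\<And>i. T i \<kappa> = \<kappa>"
  shows "cm x (\<lambda>k. \<kappa> * y k) = (\<lambda>k. \<kappa> * cm x y k)"
proof -
  have h: "(if c then E * a * T i (\<kappa> * b) else 0) = \<kappa> * (if c then E * a * T i b else (0::'b fls))" for c E a b i
    by (simp add: mult_ac T_mult assms)
  have h2: "(if P then \<kappa> * S else 0) = \<kappa> * (if P then S else (0::'b fls))" for P S
    by simp
  show ?thesis
    by (rule ext) (simp only: cyc_mult_def h sum_distrib_left[symmetric] h2)
qed

end


context ext_setup
begin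

lemmas gctx = N_pos sig_fh sigp_N

abbreviation cmx where "cmx \<equiv> cyc_mult N sig"

lemmas cmx_mono = cm_mono[OF gctx] and cmx_assoc = cm_assoc[OF gctx]
  and cmx_sum_left = cm_sum_left[OF gctx] and cmx_sum_right = cm_sum_right[OF gctx]
  and cmx_sum2 = cm_sum2[OF gctx] and cmx_carrier = cm_carrier[OF gctx]
  and cmx_one_left = cm_one_left[OF gctx] and cmx_one_right = cm_one_right[OF gctx]
  and cmx_add_left = cm_add_left[OF gctx] and cmx_add_right = cm_add_right[OF gctx]
  and cmx_zero_left = cm_zero_left[OF gctx] and cmx_zero_right = cm_zero_right[OF gctx]
  and cmx_scal_left = cm_scal_left[OF gctx] and cmx_scal_right = cm_scal_right[OF gctx]
  and decompx = decomp[OF gctx]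

abbreviation scl where "scl \<equiv> cyc_smult iota"

lemma scl_apply: "scl a x k = fls_cmap iota a * x k" by (simp add: cyc_smult_def)

lemma T_iota: "fls_cmap (sig ^^ i) (fls_cmap iota a) = fls_cmap iota a"
proof -
  have "fls_cmap (sig ^^ i) (fls_cmap iota a) = fls_cmap ((sig ^^ i) \<circ> iota) a"
    by (simp add: cmap_comp fh_0[OF sigp_fh] io_0)
  also have "(sig ^^ i) \<circ> iota = iota" by (rule ext) (simp add: sigp_iota)
  finally show ?thesis .
qed

lemma scl_def': "scl a x = (\<lambda>k. fls_cmap iota a * x k)" by (simp add: cyc_smult_def)

lemma cmx_scl_left: "cmx (scl a x) y = scl a (cmx x y)"
  unfolding scl_def' by (rule cmx_scal_left)

lemma cmx_scl_right: "cmx x (scl a y) = scl a (cmx x y)"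
  unfolding scl_def' by (rule cmx_scal_right) (rule T_iota)

lemma scl_scl: "scl a (scl b x) = scl (a * b) x"
  by (rule ext) (simp add: scl_apply cmap_mult[OF fh] mult_ac)

lemma scl_1: "scl 1 x = x"
  by (rule ext) (simp add: scl_apply cmap_1[OF fh])

lemma scl_inj:
  assumes "scl a x = scl b x" "x k \<noteq> 0"
  shows "a = b"
proof -
  have "fls_cmap iota a * x k = fls_cmap iota b * x k" using fun_cong[OF assms(1), of k] by (simp add: scl_apply)
  then have "fls_cmap iota a = fls_cmap iota b" using assms(2) by simp
  then show ?thesis using cmap_inj[OF fh] by (simp add: inj_eq)
qed

definition EE :: "nat \<times> nat \<Rightarrow> (nat \<Rightarrow> 'b fls)" where
  "EE g = mono (snd g) (fls_const (u ^ fst g))"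

definition ff :: "nat \<times> nat \<Rightarrow> nat \<times> nat \<Rightarrow> 'a fls" where
  "ff g h = fls_X ^ ((snd g + snd h) div N) *
     fls_const (inverse c ^ (S (snd g) * fst h) * a0 ^ ((fst g + fst h * m ^ snd g) div N))"

abbreviation GM where "GM \<equiv> G_mult N m"

lemma G_closed: "GM g h \<in> G_carrier N"
  using N_pos by (simp add: G_mult_def G_carrier_def)

lemma EE_carrier: "g \<in> G_carrier N \<Longrightarrow> EE g \<in> cyc_carrier N"
  by (auto simp: EE_def mono_def cyc_carrier_def G_carrier_def)

lemma EE_nz: "EE g (snd g) \<noteq> 0"
  using u_nz by (simp add: EE_def mono_def)

lemma u_pow_red: "u ^ e = iota (a0 ^ (e div N)) * u ^ (e mod N)"
proof -
  have "u ^ e = u ^ (N * (e div N) + e mod N)" by simp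
  also have "\<dots> = (u ^ N) ^ (e div N) * u ^ (e mod N)" by (simp only: power_add power_mult)
  finally have "u ^ e = (u ^ N) ^ (e div N) * u ^ (e mod N)" .
  then show ?thesis by (simp add: u_N io_power)
qed

lemma ff_nz: "ff g h \<noteq> 0"
proof -
  have "inverse c ^ (S (snd g) * fst h) * a0 ^ ((fst g + fst h * m ^ snd g) div N) \<noteq> 0"
    using c0 a0_nz by simp
  then have "fls_const (inverse c ^ (S (snd g) * fst h) * a0 ^ ((fst g + fst h * m ^ snd g) div N)) \<noteq> 0"
    by (rule fls_const_nonzero)
  moreover have "(fls_X :: 'a fls) ^ ((snd g + snd h) div N) \<noteq> 0" by (rule fls_X_pow_nonzero)
  ultimately show ?thesis unfolding ff_def by (rule no_zero_divisors[rotated])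
qed

lemma EE_mult:
  assumes "g \<in> G_carrier N" "h \<in> G_carrier N"
  shows "cmx (EE g) (EE h) = scl (ff g h) (EE (GM g h))"
proof -
  obtain a b where g: "g = (a, b)" "a < N" "b < N" using assms(1) by (cases g) (auto simp: G_carrier_def)
  obtain c' d where h: "h = (c', d)" "c' < N" "d < N" using assms(2) by (cases h) (auto simp: G_carrier_def)
  define e where "e = a + c' * m ^ b"
  have T: "fls_cmap (sig ^^ b) (fls_const (u ^ c')) = fls_const (((sig ^^ b) u) ^ c')"
    by (simp add: cmap_const[OF sigp_fh] fh_power[OF sigp_fh])
  have key: "u ^ a * ((sig ^^ b) u) ^ c' = iota (inverse c ^ (S b * c') * a0 ^ (e div N)) * u ^ (e mod N)"
  proof -
    have "u ^ a * ((sig ^^ b) u) ^ c' = iota (inverse c ^ (S b * c')) * u ^ e"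
      by (simp add: sigp_u_formula power_mult_distrib power_mult[symmetric] power_add io_power e_def mult_ac)
    also have "\<dots> = iota (inverse c ^ (S b * c') * a0 ^ (e div N)) * u ^ (e mod N)"
      by (subst u_pow_red) (simp add: io_mult mult_ac)
    finally show ?thesis .
  qed
  have "cmx (EE g) (EE h) = mono ((b + d) mod N)
          (fls_X ^ ((b + d) div N) * fls_const (u ^ a) * fls_const (((sig ^^ b) u) ^ c'))"
    unfolding EE_def g(1) h(1) fst_conv snd_conv cmx_mono[OF g(3) h(3)] T ..
  also have "\<dots> = mono ((b + d) mod N)
          (fls_X ^ ((b + d) div N) * fls_const (iota (inverse c ^ (S b * c') * a0 ^ (e div N))) * fls_const (u ^ (e mod N)))"
    by (simp only: mult.assoc fls_const_mult_const key)
  also have "\<dots> = scl (ff g h) (EE (GM g h))"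
  proof (rule ext)
    fix k
    show "mono ((b + d) mod N)
          (fls_X ^ ((b + d) div N) * fls_const (iota (inverse c ^ (S b * c') * a0 ^ (e div N))) * fls_const (u ^ (e mod N))) k
      = scl (ff g h) (EE (GM g h)) k"
      unfolding scl_apply ff_def EE_def G_mult_def g(1) h(1) fst_conv snd_conv mono_def
        cmap_mult[OF fh] cmap_power[OF fh] cmap_X[OF fh] cmap_const[OF fh] e_def
      by (simp only: mult_zero_right if_distrib[of "\<lambda>x. _ * x"])
  qed
  finally show ?thesis .
qed

end


context ext_setup
begin

lemma m_pow_mod: "m ^ (k mod N) mod N = m ^ k mod N"
  using mm_pow_mod_red[OF C_ctx] .

lemma G_assoc: "GM (GM g h) l = GM g (GM h l)"
proof -
  obtain a b where g: "g = (a, b)" by (cases g)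
  obtain c' d where h: "h = (c', d)" by (cases h)
  obtain e f where l: "l = (e, f)" by (cases l)
  have A: "((a + c' * m ^ b) mod N + e * m ^ ((b + d) mod N)) mod N = (a + c' * m ^ b + e * m ^ (b + d)) mod N"
  proof -
    have "((a + c' * m ^ b) mod N + e * m ^ ((b + d) mod N)) mod N = (a + c' * m ^ b + e * m ^ ((b + d) mod N)) mod N"
      by (simp add: mod_add_left_eq)
    also have "\<dots> = (a + c' * m ^ b + (e * m ^ ((b + d) mod N)) mod N) mod N"
      by (simp add: mod_add_right_eq)
    also have "(e * m ^ ((b + d) mod N)) mod N = (e * (m ^ ((b + d) mod N) mod N)) mod N"
      by (simp add: mod_mult_right_eq)
    also have "\<dots> = (e * (m ^ (b + d) mod N)) mod N" by (simp only: m_pow_mod)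
    also have "\<dots> = (e * m ^ (b + d)) mod N" by (simp add: mod_mult_right_eq)
    also have "(a + c' * m ^ b + (e * m ^ (b + d)) mod N) mod N = (a + c' * m ^ b + e * m ^ (b + d)) mod N"
      by (simp add: mod_add_right_eq)
    finally show ?thesis .
  qed
  have B: "(a + ((c' + e * m ^ d) mod N) * m ^ b) mod N = (a + c' * m ^ b + e * m ^ (b + d)) mod N"
  proof -
    have "(a + ((c' + e * m ^ d) mod N) * m ^ b) mod N = (a + (((c' + e * m ^ d) mod N) * m ^ b) mod N) mod N"
      by (simp add: mod_add_right_eq)
    also have "(((c' + e * m ^ d) mod N) * m ^ b) mod N = ((c' + e * m ^ d) * m ^ b) mod N"
      by (simp add: mod_mult_left_eq)
    also have "(a + ((c' + e * m ^ d) * m ^ b) mod N) mod N = (a + (c' + e * m ^ d) * m ^ b) mod N"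
      by (simp add: mod_add_right_eq)
    also have "a + (c' + e * m ^ d) * m ^ b = a + c' * m ^ b + e * m ^ (b + d)"
      by (simp add: algebra_simps power_add)
    finally show ?thesis .
  qed
  have C: "((b + d) mod N + f) mod N = (b + (d + f) mod N) mod N"
    by (simp add: mod_add_left_eq mod_add_right_eq add.assoc)
  show ?thesis unfolding g h l G_mult_def fst_conv snd_conv using A B C by simp
qed

lemma cocycle: "two_cocycle N m ff"
  unfolding two_cocycle_def
proof (intro conjI ballI)
  fix g h assume "g \<in> G_carrier N" "h \<in> G_carrier N"
  show "ff g h \<noteq> 0" by (rule ff_nz)
next
  fix g h l assume gh: "g \<in> G_carrier N" "h \<in> G_carrier N" "l \<in> G_carrier N"
  have "cmx (cmx (EE g) (EE h)) (EE l) = scl (ff g h * ff (GM g h) l) (EE (GM (GM g h) l))"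
    by (simp only: EE_mult gh G_closed cmx_scl_left scl_scl)
  moreover have "cmx (EE g) (cmx (EE h) (EE l)) = scl (ff h l * ff g (GM h l)) (EE (GM g (GM h l)))"
    by (simp only: EE_mult gh G_closed cmx_scl_right scl_scl)
  moreover have "cmx (cmx (EE g) (EE h)) (EE l) = cmx (EE g) (cmx (EE h) (EE l))"
    by (rule cmx_assoc) (simp_all add: EE_carrier gh)
  ultimately have "scl (ff g h * ff (GM g h) l) (EE (GM g (GM h l))) = scl (ff h l * ff g (GM h l)) (EE (GM g (GM h l)))"
    by (simp only: G_assoc)
  then show "ff g h * ff (GM g h) l = ff h l * ff g (GM h l)"
    by (rule scl_inj) (rule EE_nz)
qed

end


context ext_setup
begin

definition Phi :: "(nat \<times> nat \<Rightarrow> 'a fls) \<Rightarrow> (nat \<Rightarrow> 'b fls)" where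
  "Phi x = (\<Sum>g\<in>G_carrier N. scl (x g) (EE g))"

lemma Phi_apply: "Phi x k = (\<Sum>g\<in>G_carrier N. fls_cmap iota (x g) * EE g k)"
  by (simp add: Phi_def sum_fun_apply scl_apply)

lemma finG: "finite (G_carrier N)" by (simp add: G_carrier_def)

lemma Phi_add: "Phi (\<lambda>g. x g + y g) = (\<lambda>i. Phi x i + Phi y i)"
  by (rule ext) (simp add: Phi_apply cmap_add[OF fh] distrib_right sum.distrib)

lemma Phi_smult: "Phi (\<lambda>g. a * x g) = cyc_smult iota a (Phi x)"
  by (rule ext) (simp only: Phi_apply cyc_smult_def cmap_mult[OF fh] sum_distrib_left mult.assoc)

lemma Phi_basis:
  assumes "g0 \<in> G_carrier N"
  shows "Phi (tga_basis g0) = EE g0"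
proof (rule ext)
  fix k
  have "Phi (tga_basis g0) k = (\<Sum>g\<in>G_carrier N. if g0 = g then EE g k else 0)"
    unfolding Phi_apply tga_basis_def
    by (intro sum.cong refl) (auto simp: cmap_1[OF fh] cmap_0[OF fh])
  also have "\<dots> = EE g0 k" using assms finG by (simp add: sum.delta)
  finally show "Phi (tga_basis g0) k = EE g0 k" .
qed

lemma N_gt1: "1 < N" using N_ge2 by simp

lemma Phi_pi: "Phi (tga_basis G_pi) = cyc_elem_L u"
proof -
  have "G_pi \<in> G_carrier N" using N_gt1 p_gt1 by (simp add: G_pi_def G_carrier_def)
  then show ?thesis by (simp add: Phi_basis EE_def G_pi_def cyc_elem_L_def mono_def)
qed

lemma Phi_sigma: "Phi (tga_basis G_sigma) = cyc_v"
proof -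
  have "G_sigma \<in> G_carrier N" using N_gt1 p_gt1 by (simp add: G_sigma_def G_carrier_def)
  then show ?thesis by (simp add: Phi_basis EE_def G_sigma_def cyc_v_def mono_def fun_eq_iff)
qed

lemma if0_mult: "(if P then a else 0) * b = (if P then a * b else (0::'c::mult_zero))"
  by simp

lemma cmap_if: "fls_cmap iota (if P then v else 0) = (if P then fls_cmap iota v else 0)"
  by (simp add: cmap_0[OF fh])

lemma Phi_mult: "Phi (tga_mult N m ff x y) = cmx (Phi x) (Phi y)"
proof -
  have R: "cmx (Phi x) (Phi y) = (\<Sum>h\<in>G_carrier N. \<Sum>l\<in>G_carrier N. scl (x h * (y l * ff h l)) (EE (GM h l)))"
    unfolding Phi_def cmx_sum2
    by (intro sum.cong refl) (simp only: cmx_scl_left cmx_scl_right EE_mult scl_scl mult.left_commute)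
  show ?thesis
  proof (rule ext)
    fix k
    have "Phi (tga_mult N m ff x y) k = (\<Sum>g\<in>G_carrier N. \<Sum>h\<in>G_carrier N. \<Sum>l\<in>G_carrier N.
            if GM h l = g then fls_cmap iota (x h * y l * ff h l) * EE g k else 0)"
      unfolding Phi_apply tga_mult_def
      by (intro sum.cong refl) (simp only: cmap_sum[OF fh] sum_distrib_right cmap_if if0_mult if_True)
    also have "\<dots> = (\<Sum>h\<in>G_carrier N. \<Sum>g\<in>G_carrier N. \<Sum>l\<in>G_carrier N.
            if GM h l = g then fls_cmap iota (x h * y l * ff h l) * EE g k else 0)"
      by (rule sum.swap)
    also have "\<dots> = (\<Sum>h\<in>G_carrier N. \<Sum>l\<in>G_carrier N. \<Sum>g\<in>G_carrier N.
            if GM h l = g then fls_cmap iota (x h * y l * ff h l) * EE g k else 0)"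
      by (rule sum.cong[OF refl]) (rule sum.swap)
    also have "\<dots> = (\<Sum>h\<in>G_carrier N. \<Sum>l\<in>G_carrier N. fls_cmap iota (x h * y l * ff h l) * EE (GM h l) k)"
      by (intro sum.cong refl) (simp add: sum.delta finG G_closed)
    also have "\<dots> = cmx (Phi x) (Phi y) k"
      unfolding R by (simp add: sum_fun_apply scl_apply mult.assoc)
    finally show "Phi (tga_mult N m ff x y) k = cmx (Phi x) (Phi y) k" .
  qed
qed

lemma Phi_carrier: "Phi x \<in> cyc_carrier N"
  by (auto simp: cyc_carrier_def Phi_apply EE_def mono_def G_carrier_def intro!: sum.neutral)

lemma Phi_comp:
  assumes "b < N"
  shows "Phi x b = (\<Sum>a<N. fls_cmap iota (x (a, b)) * fls_const (u ^ a))"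
proof -
  have "Phi x b = (\<Sum>a<N. \<Sum>b'<N. fls_cmap iota (x (a, b')) * EE (a, b') b)"
    unfolding Phi_apply G_carrier_def lessThan_atLeast0 by (simp add: sum.cartesian_product)
  also have "\<dots> = (\<Sum>a<N. \<Sum>b'<N. if b' = b then fls_cmap iota (x (a, b)) * fls_const (u ^ a) else 0)"
    by (intro sum.cong refl) (auto simp: EE_def mono_def)
  also have "\<dots> = (\<Sum>a<N. fls_cmap iota (x (a, b)) * fls_const (u ^ a))"
    using assms by (simp add: sum.delta')
  finally show ?thesis .
qed

lemma Phi_nth:
  assumes "b < N"
  shows "Phi x b $$ j = (\<Sum>a<N. iota (x (a, b) $$ j) * u ^ a)"
  unfolding Phi_comp[OF assms] fls_nth_sum by (simp add: cmap_nth[OF fh])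

lemma Phi_inj:
  assumes "x \<in> tga_carrier N" "y \<in> tga_carrier N" "Phi x = Phi y"
  shows "x = y"
proof (rule ext)
  fix g
  show "x g = y g"
  proof (cases "g \<in> G_carrier N")
    case False
    have "x g = 0" "y g = 0" using assms(1,2) False unfolding tga_carrier_def by blast+
    then show ?thesis by simp
  next
    case True
    then obtain a b where g: "g = (a, b)" "a < N" "b < N" by (cases g) (auto simp: G_carrier_def)
    have "x (a, b) $$ n = y (a, b) $$ n" for n
    proof -
      have "(\<Sum>a<N. iota (x (a, b) $$ n) * u ^ a) = (\<Sum>a<N. iota (y (a, b) $$ n) * u ^ a)"
        using Phi_nth[OF g(3), of x n] Phi_nth[OF g(3), of y n] assms(3) by simp
      then have "(\<Sum>a<N. iota (x (a, b) $$ n - y (a, b) $$ n) * u ^ a) = 0"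
        by (simp add: io_diff left_diff_distrib sum_subtractf)
      then have "x (a, b) $$ n - y (a, b) $$ n = 0"
        using coord_zero[of "\<lambda>a. x (a, b) $$ n - y (a, b) $$ n", OF _ g(2)] by simp
      then show ?thesis by simp
    qed
    then show ?thesis using g(1) by (simp add: fls_eq_iff)
  qed
qed

lemma Phi_surj:
  assumes z: "z \<in> cyc_carrier N"
  shows "\<exists>x\<in>tga_carrier N. Phi x = z"
proof -
  define Pz where "Pz b n = (SOME P. z b $$ n = ev u P)" for b n
  have Pz: "z b $$ n = ev u (Pz b n)" for b n
    unfolding Pz_def using ev_surj by (rule someI_ex)
  define al where "al b n a = (if z b $$ n = 0 then 0 else coeff (Pz b n mod q0) a)" for b n a
  have al_sum: "z b $$ n = (\<Sum>a<N. iota (al b n a) * u ^ a)" for b n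
  proof (cases "z b $$ n = 0")
    case True then show ?thesis by (simp add: al_def io_0)
  next
    case False
    have "z b $$ n = ev u (Pz b n mod q0)" using Pz ev_mod[OF u_N] by simp
    also have "\<dots> = (\<Sum>a<N. iota (coeff (Pz b n mod q0) a) * u ^ a)" by (rule ev_sum[OF deg_mod])
    finally show ?thesis using False by (simp add: al_def)
  qed
  define x where "x g = (if g \<in> G_carrier N then Abs_fls (\<lambda>n. al (snd g) n (fst g)) else 0)" for g
  have xnth: "x (a, b) $$ n = al b n a" if "a < N" "b < N" for a b n
  proof -
    have "\<forall>k < fls_subdegree (z b). al b k a = 0" by (simp add: al_def)
    then have "Abs_fls (\<lambda>n. al b n a) $$ n = al b n a" by (rule nth_Abs_fls_lower_bound)
    then show ?thesis using that by (simp add: x_def G_carrier_def)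
  qed
  have "x \<in> tga_carrier N" by (simp add: tga_carrier_def x_def)
  moreover have "Phi x = z"
  proof (rule ext)
    fix b show "Phi x b = z b"
    proof (cases "b < N")
      case True
      show ?thesis
      proof (rule fls_eqI)
        fix n
        have "Phi x b $$ n = (\<Sum>a<N. iota (x (a, b) $$ n) * u ^ a)" by (rule Phi_nth[OF True])
        also have "\<dots> = (\<Sum>a<N. iota (al b n a) * u ^ a)"
          using True by (intro sum.cong refl) (simp add: xnth)
        also have "\<dots> = z b $$ n" by (rule al_sum[symmetric])
        finally show "Phi x b $$ n = z b $$ n" .
      qed
    next
      case False
      then show ?thesis using Phi_carrier[of x] z by (simp add: cyc_carrier_def)
    qed
  qed
  ultimately show ?thesis by blast
qed

lemma Phi_bij: "bij_betw Phi (tga_carrier N) (cyc_carrier N)"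
  unfolding bij_betw_def
proof
  show "inj_on Phi (tga_carrier N)" using Phi_inj by (auto intro: inj_onI)
  show "Phi ` tga_carrier N = cyc_carrier N"
    using Phi_carrier Phi_surj by blast
qed

end


context ext_setup
begin

lemma fls_const_diff': "fls_const (a - b) = fls_const a - fls_const (b::'b)"
  by (rule fls_eqI) simp

lemma sum_mono_apply: "j < N \<Longrightarrow> (\<Sum>i<N. mono i (w i)) j = w j"
  by (simp add: sum_fun_apply mono_def sum.delta)

lemma scalar_eq: "cyc_scalar iota a = scl a cyc_one"
  by (rule ext) (simp add: cyc_scalar_def scl_apply cyc_one_def)

lemma T0: "fls_cmap (sig ^^ 0) F = F" by simp

lemma central: "cyc_is_central iota N sig"
  unfolding cyc_is_central_def
proof
  show "range (cyc_scalar iota) \<subseteq> {z \<in> cyc_carrier N. \<forall>x\<in>cyc_carrier N. cmx z x = cmx x z}"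
  proof
    fix z assume "z \<in> range (cyc_scalar iota)"
    then obtain a where z: "z = scl a cyc_one" using scalar_eq by auto
    have "z \<in> cyc_carrier N" using one_carrier[OF gctx] unfolding z
      by (auto simp: cyc_carrier_def scl_apply)
    moreover have "cmx z x = cmx x z" if "x \<in> cyc_carrier N" for x
      unfolding z cmx_scl_left cmx_scl_right cmx_one_left[OF that] cmx_one_right[OF that] ..
    ultimately show "z \<in> {z \<in> cyc_carrier N. \<forall>x\<in>cyc_carrier N. cmx z x = cmx x z}" by blast
  qed
next
  show "{z \<in> cyc_carrier N. \<forall>x\<in>cyc_carrier N. cmx z x = cmx x z} \<subseteq> range (cyc_scalar iota)"
  proof
    fix z assume "z \<in> {z \<in> cyc_carrier N. \<forall>x\<in>cyc_carrier N. cmx z x = cmx x z}"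
    then have zc: "z \<in> cyc_carrier N" and comm: "\<And>x. x \<in> cyc_carrier N \<Longrightarrow> cmx z x = cmx x z" by auto
    define U where "U = mono 0 (fls_const u)"
    define V where "V = mono 1 (1::'b fls)"
    have Uc: "U \<in> cyc_carrier N" using N_pos p_gt1 by (simp add: U_def cyc_carrier_def mono_def)
    have Vc: "V \<in> cyc_carrier N" using N_gt1 by (simp add: V_def cyc_carrier_def mono_def)
    have zU: "cmx z U = (\<Sum>i<N. mono i (z i * fls_const ((sig ^^ i) u)))"
    proof -
      have "cmx z U = (\<Sum>i<N. cmx (mono i (z i)) U)"
        by (subst decompx[OF zc]) (simp only: cmx_sum_left)
      also have "\<dots> = (\<Sum>i<N. mono i (z i * fls_const ((sig ^^ i) u)))"
        unfolding U_def using N_pos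
        by (intro sum.cong refl) (simp add: cmx_mono cmap_const[OF sigp_fh])
      finally show ?thesis .
    qed
    have Uz: "cmx U z = (\<Sum>i<N. mono i (fls_const u * z i))"
    proof -
      have "cmx U z = (\<Sum>i<N. cmx U (mono i (z i)))"
        by (subst decompx[OF zc]) (simp only: cmx_sum_right)
      also have "\<dots> = (\<Sum>i<N. mono i (fls_const u * z i))"
        unfolding U_def using N_pos
        by (intro sum.cong refl) (simp add: cmx_mono)
      finally show ?thesis .
    qed
    have zi: "z i = 0" if "0 < i" "i < N" for i
    proof -
      have "z i * fls_const ((sig ^^ i) u) = fls_const u * z i"
        using fun_cong[OF comm[OF Uc], of i] zU Uz sum_mono_apply[OF that(2)] by metis
      then have "z i * fls_const ((sig ^^ i) u - u) = 0"
        by (simp add: fls_const_diff' algebra_simps)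
      moreover have "(sig ^^ i) u - u \<noteq> 0" using sigp_u_ne[OF that] by simp
      ultimately show ?thesis by simp
    qed
    have zm: "z = mono 0 (z 0)"
    proof (rule ext)
      fix k show "z k = mono 0 (z 0) k"
      proof (cases "k = 0")
        case False
        then show ?thesis using zi[of k] zc by (cases "k < N") (auto simp: mono_def cyc_carrier_def)
      qed (simp add: mono_def)
    qed
    have d1: "(0 + 1) mod N = 1" "(0 + 1) div N = 0" "(1 + 0) mod N = 1" "(1 + 0) div N = 0"
      using N_gt1 s1 sn by auto
    have "cmx z V = mono ((0 + 1) mod N) (fls_X ^ ((0 + 1) div N) * z 0 * fls_cmap (sig ^^ 0) 1)"
      unfolding V_def by (subst zm) (rule cmx_mono[OF N_pos N_gt1])
    then have "cmx z V = mono 1 (z 0)" unfolding d1 by simp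
    moreover have "cmx V z = mono ((1 + 0) mod N) (fls_X ^ ((1 + 0) div N) * 1 * fls_cmap (sig ^^ 1) (z 0))"
      unfolding V_def by (subst zm) (rule cmx_mono[OF N_gt1 N_pos])
    then have "cmx V z = mono 1 (fls_cmap sig (z 0))" unfolding d1 by simp
    ultimately have "mono 1 (z 0) = mono 1 (fls_cmap sig (z 0))" using comm[OF Vc] by simp
    then have z0: "fls_cmap sig (z 0) = z 0" by (metis mono_def)
    have fixk: "sig (z 0 $$ k) = z 0 $$ k" for k
      using arg_cong[OF z0, of "\<lambda>F. F $$ k"] by (simp add: cmap_nth[OF sig_fh])
    define al where "al k = (SOME a. z 0 $$ k = iota a)" for k
    have al: "iota (al k) = z 0 $$ k" for k
      unfolding al_def using fixed_iota[OF fixk] by (metis (mono_tags) someI_ex)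
    have al0: "al k = 0" if "k < fls_subdegree (z 0)" for k
      using al[of k] that io_eq0 by simp
    define A where "A = Abs_fls al"
    have "fls_cmap iota A = z 0"
    proof (rule fls_eqI)
      fix k
      have "A $$ k = al k" unfolding A_def using al0 by (intro nth_Abs_fls_lower_bound) auto
      then show "fls_cmap iota A $$ k = z 0 $$ k" by (simp add: cmap_nth[OF fh] al)
    qed
    then have "z = cyc_scalar iota A"
      by (subst zm) (auto simp: cyc_scalar_def mono_def)
    then show "z \<in> range (cyc_scalar iota)" by blast
  qed
qed

end


lemma res_uniq:
  assumes "(i::nat) < N" "j < N" "int N * a + int i = int N * b + int j"
  shows "i = j"
proof -
  have ab: "a = b"
  proof (rule ccontr)
    assume "a \<noteq> b"
    then consider "a - b \<ge> 1" | "b - a \<ge> 1" by linarith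
    then show False
    proof cases
      case 1
      then have "int N * 1 \<le> int N * (a - b)" by (intro mult_left_mono) auto
      then show False using assms by (simp add: algebra_simps)
    next
      case 2
      then have "int N * 1 \<le> int N * (b - a)" by (intro mult_left_mono) auto
      then show False using assms by (simp add: algebra_simps)
    qed
  qed
  then show ?thesis using assms by simp
qed

context ext_setup
begin

definition wv :: "(nat \<Rightarrow> 'b fls) \<Rightarrow> nat \<Rightarrow> int" where
  "wv x i = int N * fls_subdegree (x i) + int i"

lemma min_index:
  assumes "x \<in> cyc_carrier N" "x \<noteq> 0"
  obtains i0 where "i0 < N" "x i0 \<noteq> 0" "\<And>i. i < N \<Longrightarrow> x i \<noteq> 0 \<Longrightarrow> wv x i0 \<le> wv x i"
proof -
  define I where "I = {i. i < N \<and> x i \<noteq> 0}"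
  have fin: "finite I" by (simp add: I_def)
  obtain k where "x k \<noteq> 0" using assms(2) by (auto simp: fun_eq_iff)
  then have "k < N" using assms(1) by (auto simp: cyc_carrier_def not_less[symmetric])
  then have ne: "I \<noteq> {}" using \<open>x k \<noteq> 0\<close> by (auto simp: I_def)
  have "Min (wv x ` I) \<in> wv x ` I" using fin ne by simp
  then obtain i0 where i0: "i0 \<in> I" "wv x i0 = Min (wv x ` I)" by auto
  have "wv x i0 \<le> wv x i" if "i < N" "x i \<noteq> 0" for i
    using that fin i0(2) by (auto simp: I_def intro: Min_le)
  then show ?thesis using that i0(1) by (auto simp: I_def)
qed

abbreviation TT where "TT i \<equiv> fls_cmap (sig ^^ i)"

lemma cm_expand:
  "cmx x y k = (if k < N then (\<Sum>i<N. \<Sum>j<N. if (i + j) mod N = k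
          then fls_X ^ ((i + j) div N) * x i * TT i (y j) else 0) else 0)"
proof -
  have "(\<Sum>i<N. \<Sum>j<N. if (i + j) mod N = k then (if N \<le> i + j then fls_X else 1) * x i * TT i (y j) else 0)
      = (\<Sum>i<N. \<Sum>j<N. if (i + j) mod N = k then fls_X ^ ((i + j) div N) * x i * TT i (y j) else 0)"
    by (intro sum.cong refl) (simp only: X_if[OF gctx] lessThan_iff)
  then show ?thesis by (simp only: cyc_mult_def)
qed

lemma domain:
  assumes xc: "x \<in> cyc_carrier N" and yc: "y \<in> cyc_carrier N" and x0: "x \<noteq> 0" and y0: "y \<noteq> 0"
  shows "cmx x y \<noteq> 0"
proof -
  obtain i0 where i0: "i0 < N" "x i0 \<noteq> 0" "\<And>i. i < N \<Longrightarrow> x i \<noteq> 0 \<Longrightarrow> wv x i0 \<le> wv x i"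
    using min_index[OF xc x0] by blast
  obtain j0 where j0: "j0 < N" "y j0 \<noteq> 0" "\<And>j. j < N \<Longrightarrow> y j \<noteq> 0 \<Longrightarrow> wv y j0 \<le> wv y j"
    using min_index[OF yc y0] by blast
  define t where "t i j = fls_X ^ ((i + j) div N) * x i * TT i (y j)" for i j
  define k0 where "k0 = (i0 + j0) mod N"
  define r0 where "r0 = fls_subdegree (x i0) + fls_subdegree (y j0) + int ((i0 + j0) div N)"
  have k0N: "k0 < N" using N_pos by (simp add: k0_def)
  have divmod: "int N * int ((i + j) div N) + int ((i + j) mod N) = int i + int j" for i j :: nat
  proof -
    have "N * ((i + j) div N) + (i + j) mod N = i + j" by simp
    then show ?thesis by (metis of_nat_add of_nat_mult)
  qed
  have t_nz: "t i j \<noteq> 0" and t_sd: "fls_subdegree (t i j) = int ((i + j) div N) + fls_subdegree (x i) + fls_subdegree (y j)"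
    if "x i \<noteq> 0" "y j \<noteq> 0" for i j
  proof -
    have X0: "(fls_X :: 'b fls) ^ ((i + j) div N) \<noteq> 0" by (rule fls_X_pow_nonzero)
    have T0: "TT i (y j) \<noteq> 0" using that(2) cmap_eq0[OF sigp_fh] by blast
    have p1: "fls_X ^ ((i + j) div N) * x i \<noteq> 0" using X0 that(1) by (rule no_zero_divisors)
    show "t i j \<noteq> 0" unfolding t_def using p1 T0 by (rule no_zero_divisors)
    have "fls_subdegree (t i j) = fls_subdegree (fls_X ^ ((i + j) div N) * x i) + fls_subdegree (TT i (y j))"
      unfolding t_def using p1 T0 by (rule fls_subdegree_mult)
    also have "fls_subdegree (fls_X ^ ((i + j) div N) * x i) = int ((i + j) div N) + fls_subdegree (x i)"
      using fls_subdegree_mult[OF X0 that(1)] by (simp only: fls_subdegree_fls_X_pow)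
    also have "fls_subdegree (TT i (y j)) = fls_subdegree (y j)" by (rule cmap_subdegree[OF sigp_fh])
    finally show "fls_subdegree (t i j) = int ((i + j) div N) + fls_subdegree (x i) + fls_subdegree (y j)" .
  qed
  have r0_eq: "int N * r0 + int k0 = wv x i0 + wv y j0"
    using divmod[of i0 j0] by (simp add: r0_def k0_def wv_def algebra_simps)
  have other: "(if (i + j) mod N = k0 then t i j $$ r0 else 0) = (if i = i0 \<and> j = j0 then t i0 j0 $$ r0 else 0)"
    if "i < N" "j < N" for i j
  proof (cases "i = i0 \<and> j = j0")
    case True then show ?thesis by (simp add: k0_def)
  next
    case neq: False
    show ?thesis
    proof (cases "(i + j) mod N = k0")
      case False
      then show ?thesis using neq by auto
    next
      case True
      have "t i j $$ r0 = 0"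
      proof (cases "x i = 0 \<or> y j = 0")
        case True then show ?thesis by (auto simp: t_def cmap_0[OF sigp_fh])
      next
        case nz: False
        have wi: "wv x i0 \<le> wv x i" using i0(3)[OF that(1)] nz by blast
        have wj: "wv y j0 \<le> wv y j" using j0(3)[OF that(2)] nz by blast
        have "wv x i0 \<noteq> wv x i \<or> wv y j0 \<noteq> wv y j"
        proof (rule ccontr)
          assume "\<not> (wv x i0 \<noteq> wv x i \<or> wv y j0 \<noteq> wv y j)"
          then have "wv x i0 = wv x i" "wv y j0 = wv y j" by auto
          then have "i0 = i" "j0 = j" using res_uniq i0(1) j0(1) that unfolding wv_def by blast+
          then show False using neq by simp
        qed
        then have lt: "wv x i0 + wv y j0 < wv x i + wv y j" using wi wj by auto
        have "int N * fls_subdegree (t i j) + int k0 = wv x i + wv y j"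
          using t_sd[of i j] nz divmod[of i j] True by (simp add: wv_def algebra_simps)
        then have "int N * r0 < int N * fls_subdegree (t i j)" using lt r0_eq by linarith
        then have "r0 < fls_subdegree (t i j)" by (simp add: mult_less_cancel_left)
        then show ?thesis by simp
      qed
      then show ?thesis using neq True by auto
    qed
  qed
  have "cmx x y k0 $$ r0 = (\<Sum>i<N. \<Sum>j<N. if (i + j) mod N = k0 then t i j $$ r0 else 0)"
    unfolding cm_expand using k0N by (simp add: fls_nth_sum t_def if_distrib[of "\<lambda>F. F $$ r0"] cong: if_cong)
  also have "\<dots> = (\<Sum>i<N. \<Sum>j<N. if i = i0 \<and> j = j0 then t i0 j0 $$ r0 else 0)"
    by (intro sum.cong refl) (simp add: other)
  also have "\<dots> = t i0 j0 $$ r0" using i0(1) j0(1) by (rule dsum)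
  also have "t i0 j0 $$ r0 = t i0 j0 $$ fls_subdegree (t i0 j0)"
    using t_sd[OF i0(2) j0(2)] by (simp add: r0_def algebra_simps)
  finally have "cmx x y k0 $$ r0 \<noteq> 0" using t_nz[OF i0(2) j0(2)] by simp
  then show ?thesis by auto
qed

end


context ext_setup
begin

lemma W_vs: "vector_space (cyc_smult iota :: 'a fls \<Rightarrow> (nat \<Rightarrow> 'b fls) \<Rightarrow> (nat \<Rightarrow> 'b fls))"
proof unfold_locales
  fix a b :: "'a fls" and x y :: "nat \<Rightarrow> 'b fls"
  show "scl a (x + y) = scl a x + scl a y" by (rule ext) (simp add: scl_apply distrib_left)
  show "scl (a + b) x = scl a x + scl b x" by (rule ext) (simp add: scl_apply cmap_add[OF fh] distrib_right)
  show "scl a (scl b x) = scl (a * b) x" by (rule scl_scl)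
  show "scl 1 x = x" by (rule scl_1)
qed

lemma carrier_span: "(cyc_carrier N :: (nat \<Rightarrow> 'b fls) set) = module.span (cyc_smult iota) (EE ` G_carrier N)"
proof -
  interpret W: vector_space "cyc_smult iota :: 'a fls \<Rightarrow> (nat \<Rightarrow> 'b fls) \<Rightarrow> (nat \<Rightarrow> 'b fls)"
    by (rule W_vs)
  show ?thesis
  proof
    show "cyc_carrier N \<subseteq> W.span (EE ` G_carrier N)"
    proof
      fix z :: "nat \<Rightarrow> 'b fls" assume "z \<in> cyc_carrier N"
      then obtain x where "z = Phi x" using Phi_surj by metis
      moreover have "scl (x g) (EE g) \<in> W.span (EE ` G_carrier N)" if "g \<in> G_carrier N" for g
        using that by (intro W.span_scale W.span_base) simp
      ultimately show "z \<in> W.span (EE ` G_carrier N)"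
        unfolding Phi_def by (simp add: W.span_sum)
    qed
    have "W.subspace (cyc_carrier N :: (nat \<Rightarrow> 'b fls) set)"
      unfolding W.subspace_def by (auto simp: cyc_carrier_def scl_apply)
    moreover have "EE ` G_carrier N \<subseteq> cyc_carrier N" using EE_carrier by auto
    ultimately show "W.span (EE ` G_carrier N) \<subseteq> cyc_carrier N" by (rule W.span_minimal[rotated])
  qed
qed

lemma cmx_diff_right:
  fixes x y1 y2 :: "nat \<Rightarrow> 'b fls"
  shows "cmx x (y1 - y2) = cmx x y1 - cmx x y2"
proof -
  have "cmx x (y1 - y2) + cmx x y2 = cmx x y1"
    using cmx_add_right[of x "y1 - y2" y2] by simp
  then show ?thesis by (simp add: eq_diff_eq)
qed

lemma division: "cyc_is_division N sig"
  unfolding cyc_is_division_def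
proof (intro ballI impI)
  fix x :: "nat \<Rightarrow> 'b fls" assume xc: "x \<in> cyc_carrier N" and x0: "x \<noteq> (\<lambda>_. 0)"
  have x0': "x \<noteq> 0" using x0 by (simp add: zero_fun_def)
  have inj: "inj_on (cmx x) (cyc_carrier N)"
  proof (rule inj_onI)
    fix y1 y2 :: "nat \<Rightarrow> 'b fls" assume y: "y1 \<in> cyc_carrier N" "y2 \<in> cyc_carrier N" "cmx x y1 = cmx x y2"
    have "y1 - y2 \<in> cyc_carrier N" using y(1,2) by (simp add: cyc_carrier_def)
    moreover have "cmx x (y1 - y2) = 0" using y(3) by (simp add: cmx_diff_right)
    ultimately have "y1 - y2 = 0" using domain[OF xc _ x0'] by blast
    then show "y1 = y2" by simp
  qed
  have "cmx x ` cyc_carrier N = cyc_carrier N"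
    unfolding carrier_span
  proof (rule vs_inj_imp_surj_span[OF W_vs])
    show "\<And>y z. cmx x (y + z) = cmx x y + cmx x z" by (rule cmx_add_right)
    show "\<And>a y. cmx x (scl a y) = scl a (cmx x y)" by (rule cmx_scl_right)
    show "finite (EE ` G_carrier N)" using finG by simp
    show "cmx x ` module.span scl (EE ` G_carrier N) \<subseteq> module.span scl (EE ` G_carrier N)"
      using cmx_carrier carrier_span by auto
    show "inj_on (cmx x) (module.span scl (EE ` G_carrier N))" using inj carrier_span by simp
  qed
  then obtain y where yc: "y \<in> cyc_carrier N" and xy: "cmx x y = cyc_one"
    using one_carrier[OF gctx] by (metis imageE)
  have "cmx x (cmx y x) = cmx x cyc_one"
    using cmx_assoc[OF xc yc xc] xy cmx_one_left[OF xc] cmx_one_right[OF xc] by simp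
  then have "cmx y x = cyc_one"
    using inj cmx_carrier one_carrier[OF gctx] by (meson inj_onD)
  then show "\<exists>y\<in>cyc_carrier N. cmx x y = cyc_one \<and> cmx y x = cyc_one" using yc xy by blast
qed

end


theorem mainTheorem5:
  fixes p s n :: nat
    and iota :: "'a::field_char_0 \<Rightarrow> 'b::field"
    and \<xi> c :: 'a
    and u :: 'b
  assumes "prime p"
    and "1 \<le> s" and "s \<le> n" and "p = 2 \<longrightarrow> s \<noteq> 1"
    and "primitive_root_of_unity (p ^ s) \<xi>"
    and "\<not> (\<exists>z::'a. primitive_root_of_unity (p ^ (s + 1)) z)"
    and "c \<noteq> 0"
    and "field_hom iota"
    and "u ^ (p ^ n) = iota c ^ (p ^ (n - s)) * iota \<xi>"
    and "generated_field (range iota \<union> {u}) = UNIV"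
    and "ext_degree_is iota (p ^ n)"
  shows "\<exists>\<sigma>. galois_aut iota \<sigma>
      \<and> card (galois_group iota) = p ^ n
      \<and> galois_group iota = {\<sigma> ^^ i | i. i < p ^ n}
      \<and> \<sigma> u = inverse (iota c) * u ^ (p ^ s + 1)
      \<and> cyc_is_central iota (p ^ n) \<sigma>
      \<and> cyc_is_division (p ^ n) \<sigma>
      \<and> (\<exists>(f :: nat \<times> nat \<Rightarrow> nat \<times> nat \<Rightarrow> 'a fls) (\<Phi> :: (nat \<times> nat \<Rightarrow> 'a fls) \<Rightarrow> (nat \<Rightarrow> 'b fls)).
           two_cocycle (p ^ n) (p ^ s + 1) f
         \<and> bij_betw \<Phi> (tga_carrier (p ^ n)) (cyc_carrier (p ^ n))
         \<and> (\<forall>x\<in>tga_carrier (p ^ n). \<forall>y\<in>tga_carrier (p ^ n).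
               \<Phi> (\<lambda>g. x g + y g) = (\<lambda>i. \<Phi> x i + \<Phi> y i)
             \<and> \<Phi> (tga_mult (p ^ n) (p ^ s + 1) f x y) = cyc_mult (p ^ n) \<sigma> (\<Phi> x) (\<Phi> y))
         \<and> (\<forall>a. \<forall>x\<in>tga_carrier (p ^ n). \<Phi> (\<lambda>g. a * x g) = cyc_smult iota a (\<Phi> x))
         \<and> \<Phi> (tga_basis G_pi) = cyc_elem_L u
         \<and> \<Phi> (tga_basis G_sigma) = cyc_v)"
proof -
  interpret X: ext_setup p s n iota \<xi> c u
    using assms by unfold_locales auto
  have mm: "mm p s = p ^ s + 1" by (rule X.mm_def')
  show ?thesis
  proof (intro exI[of _ X.sig] conjI)
    show "galois_aut iota X.sig" by (rule X.sig_aut)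
    show "card (galois_group iota) = p ^ n" by (rule X.card_galois)
    show "galois_group iota = {X.sig ^^ i | i. i < p ^ n}" by (rule X.galois_group_eq)
    show "X.sig u = inverse (iota c) * u ^ (p ^ s + 1)" by (rule X.sig_u_formula)
    show "cyc_is_central iota (p ^ n) X.sig" by (rule X.central)
    show "cyc_is_division (p ^ n) X.sig" by (rule X.division)
    show "\<exists>(f :: nat \<times> nat \<Rightarrow> nat \<times> nat \<Rightarrow> 'a fls) (\<Phi> :: (nat \<times> nat \<Rightarrow> 'a fls) \<Rightarrow> (nat \<Rightarrow> 'b fls)).
           two_cocycle (p ^ n) (p ^ s + 1) f
         \<and> bij_betw \<Phi> (tga_carrier (p ^ n)) (cyc_carrier (p ^ n))
         \<and> (\<forall>x\<in>tga_carrier (p ^ n). \<forall>y\<in>tga_carrier (p ^ n).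
               \<Phi> (\<lambda>g. x g + y g) = (\<lambda>i. \<Phi> x i + \<Phi> y i)
             \<and> \<Phi> (tga_mult (p ^ n) (p ^ s + 1) f x y) = cyc_mult (p ^ n) X.sig (\<Phi> x) (\<Phi> y))
         \<and> (\<forall>a. \<forall>x\<in>tga_carrier (p ^ n). \<Phi> (\<lambda>g. a * x g) = cyc_smult iota a (\<Phi> x))
         \<and> \<Phi> (tga_basis G_pi) = cyc_elem_L u
         \<and> \<Phi> (tga_basis G_sigma) = cyc_v"
    proof (intro exI[of _ X.ff] exI[of _ X.Phi] conjI ballI allI)
      show "two_cocycle (p ^ n) (p ^ s + 1) X.ff" using X.cocycle mm by simp
      show "bij_betw X.Phi (tga_carrier (p ^ n)) (cyc_carrier (p ^ n))" by (rule X.Phi_bij)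
      fix x y :: "nat \<times> nat \<Rightarrow> 'a fls" assume "x \<in> tga_carrier (p ^ n)" "y \<in> tga_carrier (p ^ n)"
      show "X.Phi (\<lambda>g. x g + y g) = (\<lambda>i. X.Phi x i + X.Phi y i)" by (rule X.Phi_add)
      show "X.Phi (tga_mult (p ^ n) (p ^ s + 1) X.ff x y) = cyc_mult (p ^ n) X.sig (X.Phi x) (X.Phi y)"
        using X.Phi_mult mm by simp
    next
      fix a :: "'a fls" and x :: "nat \<times> nat \<Rightarrow> 'a fls" assume "x \<in> tga_carrier (p ^ n)"
      show "X.Phi (\<lambda>g. a * x g) = cyc_smult iota a (X.Phi x)" by (rule X.Phi_smult)
    next
      show "X.Phi (tga_basis G_pi) = cyc_elem_L u" by (rule X.Phi_pi)
      show "X.Phi (tga_basis G_sigma) = cyc_v" by (rule X.Phi_sigma)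
    qed
  qed
qed


end
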